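(* Let $1\le k\le n-1$ with $n<6$. Then there are no indecomposable rank $2$ modules in $\mathrm{CM}(B_{k,n})$.
   Context: $\Gamma_n$ is the quiver with vertices $1,\dots,n$ on a cycle, arrows $x_i\colon i-1\to i$, $y_i\colon i\to i-1$. $B_{k,n}$ is its completed path algebra modulo the closure of the ideal generated by $xy=yx$ and $x^k=y^{n-k}$ at every vertex; its centre is $Z=\mathbb{C}[[t]]$, $t=\sum_ix_iy_i$. $\mathrm{CM}(B_{k,n})$ is the category of (maximal) Cohen–Macaulay $B_{k,n}$-modules, i.e.\ $B_{k,n}$-modules that are free of finite rank over $Z$. The rank of a module $M$ is $\mathrm{len}(M\otimes_Z K)$ where $K$ is the field of fractions of $Z$ (equivalently, the $Z$-rank of $e_jM$ for any vertex idempotent $e_j$). *)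

theory Defs
  imports "HOL-Computational_Algebra.Formal_Power_Series" "Jordan_Normal_Form.Matrix"
begin

text \<open>A CM module over B_{k,n} of rank r is modelled (after choosing Z-bases) by:
  vertices 0..n-1 (cyclic), at each vertex the free Z-module Z^r with Z = complex fps,
  arrows x_i : (i-1) -> i given by r x r matrices X i, y_i : i -> (i-1) given by Y i.\<close>

definition prev_v :: "nat \<Rightarrow> nat \<Rightarrow> nat" where
  "prev_v n i = (i + n - 1) mod n"

text \<open>the path x^m starting at vertex i (i -> i+1 -> ... -> i+m)\<close>
fun xpath :: "nat \<Rightarrow> nat \<Rightarrow> (nat \<Rightarrow> complex fps mat) \<Rightarrow> nat \<Rightarrow> nat \<Rightarrow> complex fps mat" where
  "xpath n r X i 0 = 1\<^sub>m r"
| "xpath n r X i (Suc m) = X ((i + m + 1) mod n) * xpath n r X i m"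

text \<open>the path y^m starting at vertex i (i -> i-1 -> ... -> i-m)\<close>
fun ypath :: "nat \<Rightarrow> nat \<Rightarrow> (nat \<Rightarrow> complex fps mat) \<Rightarrow> nat \<Rightarrow> nat \<Rightarrow> complex fps mat" where
  "ypath n r Y i 0 = 1\<^sub>m r"
| "ypath n r Y i (Suc m) = Y ((i + (n - m mod n)) mod n) * ypath n r Y i m"

text \<open>(X,Y) defines a B_{k,n}-module whose e_j-parts are Z^r, and such that the central
  element t acts as multiplication by the power series variable.\<close>
definition cm_rep :: "nat \<Rightarrow> nat \<Rightarrow> nat \<Rightarrow> (nat \<Rightarrow> complex fps mat) \<Rightarrow> (nat \<Rightarrow> complex fps mat) \<Rightarrow> bool" where
  "cm_rep k n r X Y \<longleftrightarrow>
     (\<forall>i<n. X i \<in> carrier_mat r r \<and> Y i \<in> carrier_mat r r) \<and>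
     (\<forall>i<n. X i * Y i = Y ((i + 1) mod n) * X ((i + 1) mod n)) \<and>
     (\<forall>i<n. xpath n r X i k = ypath n r Y i (n - k)) \<and>
     (\<forall>i<n. X i * Y i = fps_X \<cdot>\<^sub>m 1\<^sub>m r)"

definition submod :: "nat \<Rightarrow> complex fps vec set \<Rightarrow> bool" where
  "submod r S \<longleftrightarrow> S \<subseteq> carrier_vec r \<and> 0\<^sub>v r \<in> S \<and>
     (\<forall>u\<in>S. \<forall>v\<in>S. u + v \<in> S) \<and> (\<forall>c. \<forall>v\<in>S. c \<cdot>\<^sub>v v \<in> S)"

definition subrep :: "nat \<Rightarrow> nat \<Rightarrow> (nat \<Rightarrow> complex fps mat) \<Rightarrow> (nat \<Rightarrow> complex fps mat)
    \<Rightarrow> (nat \<Rightarrow> complex fps vec set) \<Rightarrow> bool" where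
  "subrep n r X Y N \<longleftrightarrow> (\<forall>i<n. submod r (N i)) \<and>
     (\<forall>i<n. \<forall>v\<in>N (prev_v n i). X i *\<^sub>v v \<in> N i) \<and>
     (\<forall>i<n. \<forall>v\<in>N i. Y i *\<^sub>v v \<in> N (prev_v n i))"

definition decomposable :: "nat \<Rightarrow> nat \<Rightarrow> (nat \<Rightarrow> complex fps mat) \<Rightarrow> (nat \<Rightarrow> complex fps mat) \<Rightarrow> bool" where
  "decomposable n r X Y \<longleftrightarrow> (\<exists>N1 N2. subrep n r X Y N1 \<and> subrep n r X Y N2 \<and>
     (\<exists>i<n. N1 i \<noteq> {0\<^sub>v r}) \<and> (\<exists>i<n. N2 i \<noteq> {0\<^sub>v r}) \<and>
     (\<forall>i<n. \<forall>v\<in>carrier_vec r. \<exists>!p. fst p \<in> N1 i \<and> snd p \<in> N2 i \<and> v = fst p + snd p))"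

definition indecomposable :: "nat \<Rightarrow> nat \<Rightarrow> (nat \<Rightarrow> complex fps mat) \<Rightarrow> (nat \<Rightarrow> complex fps mat) \<Rightarrow> bool" where
  "indecomposable n r X Y \<longleftrightarrow> 0 < n \<and> 0 < r \<and> \<not> decomposable n r X Y"

end

theory Submission
  imports Defs
begin

definition sdv :: "nat \<Rightarrow> complex fps \<Rightarrow> bool" where
  "sdv e f \<longleftrightarrow> (\<forall>i<e. fps_nth f i = 0)"

lemma sdv_iff: "sdv e f \<longleftrightarrow> f = 0 \<or> e \<le> subdegree f"
  unfolding sdv_def
  by (metis fps_zero_nth nth_less_subdegree_zero order.strict_trans2 subdegree_geI)

lemma sdv_0 [simp]: "sdv 0 f" by (simp add: sdv_def)
lemma sdv_zero [simp]: "sdv e 0" by (simp add: sdv_def)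
lemma sdv_add: "sdv e f \<Longrightarrow> sdv e g \<Longrightarrow> sdv e (f + g)" by (simp add: sdv_def)
lemma sdv_diff: "sdv e f \<Longrightarrow> sdv e g \<Longrightarrow> sdv e (f - g)" by (simp add: sdv_def)
lemma sdv_uminus: "sdv e f \<Longrightarrow> sdv e (- f)" by (simp add: sdv_def)
lemma sdv_mono: "e' \<le> e \<Longrightarrow> sdv e f \<Longrightarrow> sdv e' f" by (simp add: sdv_def)

lemma sdv_mult: "sdv a f \<Longrightarrow> sdv b g \<Longrightarrow> sdv (a + b) (f * g)"
  unfolding sdv_iff by (cases "f = 0 \<or> g = 0") auto

lemma sdv_mult_left: "sdv b g \<Longrightarrow> sdv b (f * g)"
  using sdv_mult[of 0 f b g] by simp

lemma sdv_mult_right: "sdv b g \<Longrightarrow> sdv b (g * f)"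
  using sdv_mult_left[of b g f] by (simp add: mult.commute)

lemma sdv_cancel: "f \<noteq> 0 \<Longrightarrow> sdv m (f * g) \<Longrightarrow> sdv (m - subdegree f) g"
  unfolding sdv_iff by (cases "g = 0") auto

lemma sdv_X: "sdv 1 fps_X" by (simp add: sdv_def)

lemma sdv_Xpow: "sdv e (fps_X ^ e)" by (simp add: sdv_def)

lemma sdv_const: "fps_nth f 0 = 0 \<Longrightarrow> sdv 1 f" by (simp add: sdv_def)

lemma sdv_unit: "fps_nth f 0 \<noteq> 0 \<Longrightarrow> \<not> sdv 1 f" by (simp add: sdv_def)

definition cont2 :: "complex fps \<Rightarrow> complex fps \<Rightarrow> nat" where
  "cont2 x y = (if x = 0 then subdegree y else if y = 0 then subdegree x
                else min (subdegree x) (subdegree y))"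

lemma cont2_iff: "x \<noteq> 0 \<or> y \<noteq> 0 \<Longrightarrow> (sdv e x \<and> sdv e y) \<longleftrightarrow> e \<le> cont2 x y"
  unfolding cont2_def sdv_iff by auto

lemma cont2_le: "x \<noteq> 0 \<or> y \<noteq> 0 \<Longrightarrow> sdv e x \<Longrightarrow> sdv e y \<Longrightarrow> e \<le> cont2 x y"
  using cont2_iff by blast

lemma cont2_dv: "x \<noteq> 0 \<or> y \<noteq> 0 \<Longrightarrow> sdv (cont2 x y) x \<and> sdv (cont2 x y) y"
  using cont2_iff by blast

lemma step_scalar:
  fixes a b c d p q r s x y :: "complex fps"
  assumes AB: "a*p + b*r = fps_X" "a*q + b*s = 0" "c*p + d*r = 0" "c*q + d*s = fps_X"
    and BA: "p*a + q*c = fps_X" "p*b + q*d = 0" "r*a + s*c = 0" "r*b + s*d = fps_X"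
    and nz: "x \<noteq> 0 \<or> y \<noteq> 0"
  shows "(a*x + b*y \<noteq> 0 \<or> c*x + d*y \<noteq> 0) \<and> a*d - b*c \<noteq> 0 \<and> subdegree (a*d - b*c) \<le> 2 \<and>
     cont2 x y \<le> cont2 (a*x + b*y) (c*x + d*y) \<and>
     cont2 (a*x + b*y) (c*x + d*y) \<le> cont2 x y + 1 \<and>
     cont2 x y + subdegree (a*d - b*c) \<le> cont2 (a*x + b*y) (c*x + d*y) + 1 \<and>
     cont2 (a*x + b*y) (c*x + d*y) \<le> cont2 x y + subdegree (a*d - b*c)"
proof -
  define x' where "x' = a*x + b*y"
  define y' where "y' = c*x + d*y"
  define dA where "dA = a*d - b*c"
  define dB where "dB = p*s - q*r"
  have "dA * dB = (a*p+b*r)*(c*q+d*s) - (a*q+b*s)*(c*p+d*r)"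
    unfolding dA_def dB_def by (simp add: algebra_simps)
  hence dAB: "dA * dB = fps_X * fps_X" using AB by simp
  hence dA0: "dA \<noteq> 0" and dB0: "dB \<noteq> 0" by auto
  have sAB: "subdegree dA + subdegree dB = 2"
    using dAB dA0 dB0 by (metis one_add_one subdegree_fps_X subdegree_mult fps_X_neq_zero)
  have Bz1: "p*x' + q*y' = fps_X * x"
  proof -
    have "p*x' + q*y' = (p*a+q*c)*x + (p*b+q*d)*y" unfolding x'_def y'_def by (simp add: algebra_simps)
    thus ?thesis using BA by simp
  qed
  have Bz2: "r*x' + s*y' = fps_X * y"
  proof -
    have "r*x' + s*y' = (r*a+s*c)*x + (r*b+s*d)*y" unfolding x'_def y'_def by (simp add: algebra_simps)
    thus ?thesis using BA by simp
  qed
  have Az1: "d*x' - b*y' = dA * x" unfolding x'_def y'_def dA_def by (simp add: algebra_simps)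
  have Az2: "a*y' - c*x' = dA * y" unfolding x'_def y'_def dA_def by (simp add: algebra_simps)
  have ea: "dB*a = fps_X * s"
  proof -
    have "dB*a = s*(p*a+q*c) - q*(r*a+s*c)" unfolding dB_def by (simp add: algebra_simps)
    thus ?thesis using BA by (simp add: mult.commute)
  qed
  have eb: "dB*b = - (fps_X * q)"
  proof -
    have "dB*b = s*(p*b+q*d) - q*(r*b+s*d)" unfolding dB_def by (simp add: algebra_simps)
    thus ?thesis using BA by (simp add: mult.commute)
  qed
  have ec: "dB*c = - (fps_X * r)"
  proof -
    have "dB*c = p*(s*c+r*a) - r*(q*c+p*a)" unfolding dB_def by (simp add: algebra_simps)
    thus ?thesis using BA by (simp add: mult.commute add.commute)
  qed
  have ed: "dB*d = fps_X * p"
  proof -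
    have "dB*d = p*(s*d+r*b) - r*(q*d+p*b)" unfolding dB_def by (simp add: algebra_simps)
    thus ?thesis using BA by (simp add: mult.commute add.commute)
  qed
  have Cz1: "dB * x' = fps_X * (s*x - q*y)"
  proof -
    have "dB * x' = (dB*a)*x + (dB*b)*y" unfolding x'_def by (simp add: algebra_simps)
    also have "\<dots> = (fps_X*s)*x + (-(fps_X*q))*y" by (simp only: ea eb)
    also have "\<dots> = fps_X * (s*x - q*y)" by (simp add: algebra_simps)
    finally show ?thesis .
  qed
  have Cz2: "dB * y' = fps_X * (p*y - r*x)"
  proof -
    have "dB * y' = (dB*c)*x + (dB*d)*y" unfolding y'_def by (simp add: algebra_simps)
    also have "\<dots> = (-(fps_X*r))*x + (fps_X*p)*y" by (simp only: ec ed)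
    also have "\<dots> = fps_X * (p*y - r*x)" by (simp add: algebra_simps)
    finally show ?thesis .
  qed
  have nz': "x' \<noteq> 0 \<or> y' \<noteq> 0"
  proof (rule ccontr)
    assume "\<not> ?thesis"
    hence "fps_X * x = 0" "fps_X * y = 0" using Bz1 Bz2 by auto
    thus False using nz by simp
  qed
  define c0 where "c0 = cont2 x y"
  define c1 where "c1 = cont2 x' y'"
  have dz: "sdv c0 x" "sdv c0 y" using cont2_dv[OF nz] c0_def by auto
  have dz': "sdv c1 x'" "sdv c1 y'" using cont2_dv[OF nz'] c1_def by auto
  have i1: "c0 \<le> c1"
    unfolding c1_def x'_def y'_def
    using nz' unfolding x'_def y'_def
    by (intro cont2_le) (auto intro!: sdv_add sdv_mult_left dz)
  have i2: "c1 \<le> c0 + 1"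
  proof -
    have "sdv c1 (fps_X * x)" "sdv c1 (fps_X * y)"
      using Bz1 Bz2 dz' by (metis sdv_add sdv_mult_left)+
    hence "sdv (c1 - 1) x" "sdv (c1 - 1) y" using sdv_cancel[of fps_X c1] by auto
    hence "c1 - 1 \<le> c0" unfolding c0_def using cont2_le[OF nz] by blast
    thus ?thesis by simp
  qed
  have i3: "c1 \<le> c0 + subdegree dA"
  proof -
    have "sdv c1 (dA * x)" "sdv c1 (dA * y)"
      using Az1 Az2 dz' by (metis sdv_diff sdv_mult_left)+
    hence "sdv (c1 - subdegree dA) x" "sdv (c1 - subdegree dA) y" using sdv_cancel[OF dA0] by auto
    hence "c1 - subdegree dA \<le> c0" unfolding c0_def using cont2_le[OF nz] by blast
    thus ?thesis by simp
  qed
  have i4: "c0 + subdegree dA \<le> c1 + 1"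
  proof -
    have "sdv (1 + c0) (fps_X * (s*x - q*y))" "sdv (1 + c0) (fps_X * (p*y - r*x))"
      by (intro sdv_mult sdv_X sdv_diff sdv_mult_left dz)+
    hence "sdv (1 + c0) (dB * x')" "sdv (1 + c0) (dB * y')" using Cz1 Cz2 by auto
    hence "sdv (1 + c0 - subdegree dB) x'" "sdv (1 + c0 - subdegree dB) y'"
      using sdv_cancel[OF dB0] by auto
    hence "1 + c0 - subdegree dB \<le> c1" unfolding c1_def using cont2_le[OF nz'] by blast
    thus ?thesis using sAB by linarith
  qed
  show ?thesis using nz' dA0 sAB i1 i2 i3 i4
    unfolding c0_def c1_def x'_def y'_def dA_def by auto
qed

definition nzv :: "complex fps vec \<Rightarrow> bool" where "nzv v \<longleftrightarrow> v$0 \<noteq> 0 \<or> v$1 \<noteq> 0"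
definition cv :: "complex fps vec \<Rightarrow> nat" where "cv v = cont2 (v$0) (v$1)"
definition vdv :: "nat \<Rightarrow> complex fps vec \<Rightarrow> bool" where "vdv e v \<longleftrightarrow> sdv e (v$0) \<and> sdv e (v$1)"
definition mdet :: "complex fps mat \<Rightarrow> complex fps" where
  "mdet A = A$$(0,0)*A$$(1,1) - A$$(0,1)*A$$(1,0)"
definition det2 :: "complex fps vec \<Rightarrow> complex fps vec \<Rightarrow> complex fps" where
  "det2 v w = v$0 * w$1 - v$1 * w$0"

lemma cv_iff: "nzv v \<Longrightarrow> vdv e v \<longleftrightarrow> e \<le> cv v"
  unfolding nzv_def cv_def vdv_def using cont2_iff by blast

lemma cv_le: "nzv v \<Longrightarrow> vdv e v \<Longrightarrow> e \<le> cv v" using cv_iff by blast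
lemma cv_dv: "nzv v \<Longrightarrow> vdv (cv v) v" using cv_iff by blast

lemma sum2: "(\<Sum>i\<in>{0..<2::nat}. f i) = f 0 + f 1"
  by (simp add: numeral_2_eq_2)

lemma mv0: "A \<in> carrier_mat 2 2 \<Longrightarrow> v \<in> carrier_vec 2 \<Longrightarrow> (A *\<^sub>v v)$0 = A$$(0,0)*v$0 + A$$(0,1)*v$1"
  by (simp add: mult_mat_vec_def scalar_prod_def sum2)
lemma mv1: "A \<in> carrier_mat 2 2 \<Longrightarrow> v \<in> carrier_vec 2 \<Longrightarrow> (A *\<^sub>v v)$1 = A$$(1,0)*v$0 + A$$(1,1)*v$1"
  by (simp add: mult_mat_vec_def scalar_prod_def sum2)

lemma mm: "A \<in> carrier_mat 2 2 \<Longrightarrow> B \<in> carrier_mat 2 2 \<Longrightarrow> i < 2 \<Longrightarrow> j < 2 \<Longrightarrow>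
   (A * B)$$(i,j) = A$$(i,0)*B$$(0,j) + A$$(i,1)*B$$(1,j)"
  by (simp add: scalar_prod_def sum2)

lemma mm00: "A \<in> carrier_mat 2 2 \<Longrightarrow> B \<in> carrier_mat 2 2 \<Longrightarrow> (A * B)$$(0,0) = A$$(0,0)*B$$(0,0) + A$$(0,1)*B$$(1,0)"
  by (rule mm) auto
lemma mm01: "A \<in> carrier_mat 2 2 \<Longrightarrow> B \<in> carrier_mat 2 2 \<Longrightarrow> (A * B)$$(0,1) = A$$(0,0)*B$$(0,1) + A$$(0,1)*B$$(1,1)"
  by (rule mm) auto
lemma mm10: "A \<in> carrier_mat 2 2 \<Longrightarrow> B \<in> carrier_mat 2 2 \<Longrightarrow> (A * B)$$(1,0) = A$$(1,0)*B$$(0,0) + A$$(1,1)*B$$(1,0)"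
  by (rule mm) auto
lemma mm11: "A \<in> carrier_mat 2 2 \<Longrightarrow> B \<in> carrier_mat 2 2 \<Longrightarrow> (A * B)$$(1,1) = A$$(1,0)*B$$(0,1) + A$$(1,1)*B$$(1,1)"
  by (rule mm) auto

lemma sc_idx: "i < 2 \<Longrightarrow> j < 2 \<Longrightarrow> (c \<cdot>\<^sub>m 1\<^sub>m 2)$$(i,j) = (if i = j then c else (0::complex fps))"
  by simp

lemma mdet_mult: assumes A: "A \<in> carrier_mat 2 2" and B: "B \<in> carrier_mat 2 2" shows "mdet (A * B) = mdet A * mdet B"
  unfolding mdet_def mm00[OF A B] mm01[OF A B] mm10[OF A B] mm11[OF A B] by (simp add: algebra_simps)

lemma det2_mv: assumes A: "A \<in> carrier_mat 2 2" and v: "v \<in> carrier_vec 2" and w: "w \<in> carrier_vec 2" shows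
  "det2 (A *\<^sub>v v) (A *\<^sub>v w) = mdet A * det2 v w"
  unfolding mdet_def det2_def mv0[OF A v] mv1[OF A v] mv0[OF A w] mv1[OF A w] by (simp add: algebra_simps)

lemma step_vec:
  assumes A: "A \<in> carrier_mat 2 2" and B: "B \<in> carrier_mat 2 2"
    and AB: "A * B = fps_X \<cdot>\<^sub>m 1\<^sub>m 2" and BA: "B * A = fps_X \<cdot>\<^sub>m 1\<^sub>m 2"
    and z: "z \<in> carrier_vec 2" and nz: "nzv z"
  shows "nzv (A *\<^sub>v z) \<and> mdet A \<noteq> 0 \<and> subdegree (mdet A) \<le> 2 \<and>
     cv z \<le> cv (A *\<^sub>v z) \<and> cv (A *\<^sub>v z) \<le> cv z + 1 \<and>
     cv z + subdegree (mdet A) \<le> cv (A *\<^sub>v z) + 1 \<and> cv (A *\<^sub>v z) \<le> cv z + subdegree (mdet A)"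
proof -
  have e1: "(A*B)$$(0,0) = fps_X" "(A*B)$$(0,1) = 0" "(A*B)$$(1,0) = 0" "(A*B)$$(1,1) = fps_X"
    using AB by simp_all
  have e2: "(B*A)$$(0,0) = fps_X" "(B*A)$$(0,1) = 0" "(B*A)$$(1,0) = 0" "(B*A)$$(1,1) = fps_X"
    using BA by simp_all
  note S = step_scalar[of "A$$(0,0)" "B$$(0,0)" "A$$(0,1)" "B$$(1,0)" "B$$(0,1)" "B$$(1,1)"
      "A$$(1,0)" "A$$(1,1)" "z$0" "z$1"]
  have "(A *\<^sub>v z)$0 \<noteq> 0 \<or> (A *\<^sub>v z)$1 \<noteq> 0 \<Longrightarrow> nzv (A *\<^sub>v z)" by (simp add: nzv_def)
  show ?thesis
    using S e1 e2 nz unfolding mm00[OF A B] mm01[OF A B] mm10[OF A B] mm11[OF A B]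
      mm00[OF B A] mm01[OF B A] mm10[OF B A] mm11[OF B A]
    unfolding nzv_def cv_def mdet_def mv0[OF A z] mv1[OF A z]
    by auto
qed

definition e0 :: "complex fps vec" where "e0 = vec 2 (\<lambda>i. if i = 0 then 1 else 0)"
definition e1 :: "complex fps vec" where "e1 = vec 2 (\<lambda>i. if i = 0 then 0 else 1)"
definition prim :: "complex fps vec \<Rightarrow> bool" where
  "prim u \<longleftrightarrow> fps_nth (u$0) 0 \<noteq> 0 \<or> fps_nth (u$1) 0 \<noteq> 0"
definition mdv :: "nat \<Rightarrow> complex fps mat \<Rightarrow> bool" where
  "mdv e P \<longleftrightarrow> sdv e (P$$(0,0)) \<and> sdv e (P$$(0,1)) \<and> sdv e (P$$(1,0)) \<and> sdv e (P$$(1,1))"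

lemma e0_car [simp]: "e0 \<in> carrier_vec 2" and e1_car [simp]: "e1 \<in> carrier_vec 2"
  by (simp_all add: e0_def e1_def)
lemma e0_idx [simp]: "e0$0 = 1" "e0$1 = 0" "e0$Suc 0 = 0" and e1_idx [simp]: "e1$0 = 0" "e1$1 = 1" "e1$Suc 0 = 1"
  by (simp_all add: e0_def e1_def)

lemma Pe: assumes "P \<in> carrier_mat 2 2"
  shows "(P *\<^sub>v e0)$0 = P$$(0,0)" "(P *\<^sub>v e0)$1 = P$$(1,0)"
        "(P *\<^sub>v e1)$0 = P$$(0,1)" "(P *\<^sub>v e1)$1 = P$$(1,1)"
  using mv0[OF assms e0_car] mv1[OF assms e0_car] mv0[OF assms e1_car] mv1[OF assms e1_car] by simp_all

lemma mdv_iff: assumes P: "P \<in> carrier_mat 2 2" and n0: "nzv (P *\<^sub>v e0)" and n1: "nzv (P *\<^sub>v e1)"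
  shows "mdv e P \<longleftrightarrow> e \<le> min (cv (P *\<^sub>v e0)) (cv (P *\<^sub>v e1))"
  using cv_iff[OF n0, of e] cv_iff[OF n1, of e] unfolding mdv_def vdv_def Pe[OF P] by auto

lemma mdv_mv: assumes P: "P \<in> carrier_mat 2 2" and z: "z \<in> carrier_vec 2" and "mdv a P" "vdv b z"
  shows "vdv (a + b) (P *\<^sub>v z)"
  using assms(3,4) unfolding vdv_def mdv_def mv0[OF P z] mv1[OF P z]
  by (auto intro!: sdv_add sdv_mult)

lemma mdv_mv0: assumes P: "P \<in> carrier_mat 2 2" and z: "z \<in> carrier_vec 2" and "mdv a P"
  shows "vdv a (P *\<^sub>v z)"
  using mdv_mv[OF P z assms(3), of 0] by (simp add: vdv_def)

lemma prim_nzv: "prim u \<Longrightarrow> nzv u"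
  unfolding prim_def nzv_def by auto

lemma cv_prim: assumes "prim u" shows "cv u = 0"
proof -
  have "\<not> vdv 1 u" using assms unfolding prim_def vdv_def using sdv_unit by blast
  thus ?thesis using cv_iff[OF prim_nzv[OF assms], of 1] by auto
qed

lemma nz_mv: assumes P: "P \<in> carrier_mat 2 2" and d: "mdet P \<noteq> 0" and z: "z \<in> carrier_vec 2" and nz: "nzv z"
  shows "nzv (P *\<^sub>v z)"
proof (rule ccontr)
  assume a: "\<not> nzv (P *\<^sub>v z)"
  have "P$$(1,1) * (P *\<^sub>v z)$0 - P$$(0,1) * (P *\<^sub>v z)$1 = mdet P * z$0"
    "P$$(0,0) * (P *\<^sub>v z)$1 - P$$(1,0) * (P *\<^sub>v z)$0 = mdet P * z$1"
    unfolding mv0[OF P z] mv1[OF P z] mdet_def by (simp_all add: algebra_simps)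
  hence "mdet P * z$0 = 0" "mdet P * z$1 = 0" using a unfolding nzv_def by auto
  thus False using d nz unfolding nzv_def by auto
qed

lemma shift_eq: "sdv e f \<Longrightarrow> fps_shift e f * fps_X ^ e = f"
  unfolding sdv_iff by (auto intro: fps_shift_times_fps_X_power)

lemma sdv_nth: "sdv e f \<Longrightarrow> \<not> sdv (Suc e) f \<Longrightarrow> fps_nth f e \<noteq> 0"
  unfolding sdv_def by (metis less_Suc_eq)

lemma cancel_X: "a * fps_X ^ e = b * fps_X ^ e \<Longrightarrow> a = (b :: complex fps)"
  by simp

lemma L_exists:
  assumes P: "P \<in> carrier_mat 2 2" and d: "mdet P \<noteq> 0"
    and n0: "nzv (P *\<^sub>v e0)" and n1: "nzv (P *\<^sub>v e1)"
  shows "\<exists>u \<in> carrier_vec 2. prim u \<and>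
           subdegree (mdet P) \<le> cv (P *\<^sub>v u) + min (cv (P *\<^sub>v e0)) (cv (P *\<^sub>v e1))"
proof -
  define E where "E = min (cv (P *\<^sub>v e0)) (cv (P *\<^sub>v e1))"
  have mE: "mdv E P" using mdv_iff[OF P n0 n1] E_def by auto
  have mE1: "\<not> mdv (Suc E) P" using mdv_iff[OF P n0 n1, of "Suc E"] E_def by auto
  have s: "sdv E (P$$(0,0))" "sdv E (P$$(0,1))" "sdv E (P$$(1,0))" "sdv E (P$$(1,1))"
    using mE unfolding mdv_def by auto
  have sh: "fps_shift E (P$$(i,j)) * fps_X ^ E = P$$(i,j)" if "i < 2" "j < 2" for i j
    using s that shift_eq by (auto simp: less_2_cases_iff)
  have shm: "fps_shift E (- P$$(i,j)) * fps_X ^ E = - P$$(i,j)" if "i < 2" "j < 2" for i j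
    using s that shift_eq sdv_uminus by (auto simp: less_2_cases_iff)
  have h00: "fps_shift E (P$$(0,0)) * fps_X ^ E = P$$(0,0)" by (rule sh) auto
  have h11: "fps_shift E (P$$(1,1)) * fps_X ^ E = P$$(1,1)" by (rule sh) auto
  have hm01: "fps_shift E (- P$$(0,1)) * fps_X ^ E = - P$$(0,1)" by (rule shm) auto
  have hm10: "fps_shift E (- P$$(1,0)) * fps_X ^ E = - P$$(1,0)" by (rule shm) auto
  show ?thesis
  proof (cases "\<not> sdv (Suc E) (P$$(0,0)) \<or> \<not> sdv (Suc E) (P$$(0,1))")
    case True
    define u where "u = vec 2 (\<lambda>i. if i = 0 then fps_shift E (- P$$(0,1)) else fps_shift E (P$$(0,0)))"
    have uc: "u \<in> carrier_vec 2" by (simp add: u_def)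
    have pu: "prim u" unfolding prim_def u_def using True s sdv_nth by auto
    have "(P *\<^sub>v u)$0 * fps_X^E = P$$(0,0) * (fps_shift E (- P$$(0,1)) * fps_X ^ E)
            + P$$(0,1) * (fps_shift E (P$$(0,0)) * fps_X ^ E)"
      unfolding mv0[OF P uc] by (simp add: u_def algebra_simps)
    also have "\<dots> = 0 * fps_X ^ E" by (simp only: h00 h11 hm01 hm10) (simp add: algebra_simps)
    finally have z0: "(P *\<^sub>v u)$0 = 0" by (rule cancel_X)
    have "(P *\<^sub>v u)$1 * fps_X^E = P$$(1,0) * (fps_shift E (- P$$(0,1)) * fps_X ^ E)
            + P$$(1,1) * (fps_shift E (P$$(0,0)) * fps_X ^ E)"
      unfolding mv1[OF P uc] by (simp add: u_def algebra_simps)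
    also have "\<dots> = mdet P" by (simp only: h00 h11 hm01 hm10) (simp add: mdet_def algebra_simps)
    finally have z1: "(P *\<^sub>v u)$1 * fps_X^E = mdet P" .
    hence nz1: "(P *\<^sub>v u)$1 \<noteq> 0" using d by auto
    have "subdegree (mdet P) = subdegree ((P *\<^sub>v u)$1) + E"
      using z1 nz1 by (metis fps_subdegree_mult_fps_X_power(2))
    moreover have "cv (P *\<^sub>v u) = subdegree ((P *\<^sub>v u)$1)" unfolding cv_def cont2_def using z0 by simp
    ultimately show ?thesis using uc pu E_def by auto
  next
    case False
    hence F: "\<not> sdv (Suc E) (P$$(1,0)) \<or> \<not> sdv (Suc E) (P$$(1,1))" using mE1 unfolding mdv_def by auto
    define u where "u = vec 2 (\<lambda>i. if i = 0 then fps_shift E (P$$(1,1)) else fps_shift E (- P$$(1,0)))"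
    have uc: "u \<in> carrier_vec 2" by (simp add: u_def)
    have pu: "prim u" unfolding prim_def u_def using F s sdv_nth by auto
    have "(P *\<^sub>v u)$1 * fps_X^E = P$$(1,0) * (fps_shift E (P$$(1,1)) * fps_X ^ E)
            + P$$(1,1) * (fps_shift E (- P$$(1,0)) * fps_X ^ E)"
      unfolding mv1[OF P uc] by (simp add: u_def algebra_simps)
    also have "\<dots> = 0 * fps_X ^ E" by (simp only: h00 h11 hm01 hm10) (simp add: algebra_simps)
    finally have z0: "(P *\<^sub>v u)$1 = 0" by (rule cancel_X)
    have "(P *\<^sub>v u)$0 * fps_X^E = P$$(0,0) * (fps_shift E (P$$(1,1)) * fps_X ^ E)
            + P$$(0,1) * (fps_shift E (- P$$(1,0)) * fps_X ^ E)"
      unfolding mv0[OF P uc] by (simp add: u_def algebra_simps)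
    also have "\<dots> = mdet P" by (simp only: h00 h11 hm01 hm10) (simp add: mdet_def algebra_simps)
    finally have z1: "(P *\<^sub>v u)$0 * fps_X^E = mdet P" .
    hence nz1: "(P *\<^sub>v u)$0 \<noteq> 0" using d by auto
    have "subdegree (mdet P) = subdegree ((P *\<^sub>v u)$0) + E"
      using z1 nz1 by (metis fps_subdegree_mult_fps_X_power(2))
    moreover have "cv (P *\<^sub>v u) = subdegree ((P *\<^sub>v u)$0)" unfolding cv_def cont2_def using z0 nz1 by simp
    ultimately show ?thesis using uc pu E_def by auto
  qed
qed

lemma det_bound:
  assumes P: "P \<in> carrier_mat 2 2" and d: "mdet P \<noteq> 0" and u: "u \<in> carrier_vec 2" and w: "w \<in> carrier_vec 2"
    and dt: "fps_nth (det2 u w) 0 \<noteq> 0" and nu: "nzv (P *\<^sub>v u)" and nw: "nzv (P *\<^sub>v w)"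
  shows "cv (P *\<^sub>v u) + cv (P *\<^sub>v w) \<le> subdegree (mdet P)"
proof -
  have a: "vdv (cv (P *\<^sub>v u)) (P *\<^sub>v u)" "vdv (cv (P *\<^sub>v w)) (P *\<^sub>v w)" using cv_dv nu nw by auto
  have "sdv (cv (P *\<^sub>v u) + cv (P *\<^sub>v w)) (det2 (P *\<^sub>v u) (P *\<^sub>v w))"
    using a unfolding det2_def vdv_def by (auto intro!: sdv_diff sdv_mult)
  hence "sdv (cv (P *\<^sub>v u) + cv (P *\<^sub>v w)) (mdet P * det2 u w)" using det2_mv[OF P u w] by simp
  moreover have "det2 u w \<noteq> 0" using dt by auto
  moreover have "subdegree (det2 u w) = 0" using dt by simp
  ultimately show ?thesis using d unfolding sdv_iff by auto
qed

lemma closure_lem: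
  assumes P: "P \<in> carrier_mat 2 2" and mE: "mdv E P" and u: "u \<in> carrier_vec 2" and w: "w \<in> carrier_vec 2"
    and pw: "prim w" and dt: "fps_nth (det2 u w) 0 = 0" and vw: "vdv (Suc E) (P *\<^sub>v w)"
  shows "vdv (Suc E) (P *\<^sub>v u)"
proof -
  define u0 where "u0 = fps_nth (u$0) 0"
  define u1 where "u1 = fps_nth (u$1) 0"
  define w0 where "w0 = fps_nth (w$0) 0"
  define w1 where "w1 = fps_nth (w$1) 0"
  have dd: "u0 * w1 - u1 * w0 = 0" using dt unfolding det2_def u0_def u1_def w0_def w1_def by simp
  define l where "l = (if w0 \<noteq> 0 then u0 / w0 else u1 / w1)"
  have w01: "w0 \<noteq> 0 \<or> w1 \<noteq> 0" using pw unfolding prim_def w0_def w1_def by auto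
  have c0: "u0 - l * w0 = 0" and c1: "u1 - l * w1 = 0"
  proof -
    show "u0 - l * w0 = 0"
    proof (cases "w0 = 0")
      case True thus ?thesis using dd w01 l_def by auto
    next
      case False thus ?thesis using l_def by auto
    qed
    show "u1 - l * w1 = 0"
    proof (cases "w0 = 0")
      case True thus ?thesis using w01 l_def by auto
    next
      case False
      have "u1 * w0 = u0 * w1" using dd by simp
      have ll: "l = u0 / w0" using False l_def by simp
      have "u1 - l * w1 = (u1 * w0 - u0 * w1) / w0" unfolding ll using False by (simp add: field_simps)
      thus ?thesis using dd by (simp add: mult.commute)
    qed
  qed
  define z where "z = vec 2 (\<lambda>i. u$i - fps_const l * w$i)"
  have zc: "z \<in> carrier_vec 2" by (simp add: z_def)
  have zz: "fps_nth (z$0) 0 = 0" "fps_nth (z$1) 0 = 0" unfolding z_def using c0 c1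
    by (simp_all add: u0_def u1_def w0_def w1_def)
  have vz: "vdv 1 z" unfolding vdv_def using zz sdv_const by blast
  have "vdv (E + 1) (P *\<^sub>v z)" using mdv_mv[OF P zc mE vz] .
  hence vz': "vdv (Suc E) (P *\<^sub>v z)" by simp
  have eq0: "(P *\<^sub>v u)$0 = fps_const l * (P *\<^sub>v w)$0 + (P *\<^sub>v z)$0"
    unfolding mv0[OF P u] mv0[OF P w] mv0[OF P zc] by (simp add: z_def algebra_simps)
  have eq1: "(P *\<^sub>v u)$1 = fps_const l * (P *\<^sub>v w)$1 + (P *\<^sub>v z)$1"
    unfolding mv1[OF P u] mv1[OF P w] mv1[OF P zc] by (simp add: z_def algebra_simps)
  show ?thesis using vw vz' unfolding vdv_def eq0 eq1 by (auto intro!: sdv_add sdv_mult_left)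
qed

definition stp :: "(nat \<Rightarrow> int) \<Rightarrow> (nat \<Rightarrow> bool) \<Rightarrow> nat \<Rightarrow> bool" where
  "stp s M j \<longleftrightarrow> s j \<le> s (j-1) + 1 \<and> s (j-1) \<le> s j + 1 \<and>
      (s j \<le> s (j-1) \<longrightarrow> M (j-1) \<longrightarrow> M j) \<and> (s (j-1) \<le> s j \<longrightarrow> M j \<longrightarrow> M (j-1))"

lemma lip:
  assumes st: "\<forall>j. 1 \<le> j \<longrightarrow> j \<le> n \<longrightarrow> stp s M j" and ab: "a \<le> b" "b \<le> n"
  shows "\<bar>s b - s a\<bar> \<le> int (b - a)"
  using ab
proof (induction b rule: dec_induct)
  case base then show ?case by simp
next
  case (step m)
  have "stp s M (Suc m)" using st step by auto
  hence "s (Suc m) \<le> s m + 1" "s m \<le> s (Suc m) + 1" unfolding stp_def by auto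
  thus ?case using step by auto
qed

lemma goR:
  assumes st: "\<forall>j. 1 \<le> j \<longrightarrow> j \<le> n \<longrightarrow> stp s M j" and ij: "i \<le> j" "j \<le> n" and Mi: "M i"
    and mono: "\<forall>l. i < l \<longrightarrow> l \<le> j \<longrightarrow> s l \<le> s (l-1)"
  shows "M j"
  using ij mono
proof (induction j rule: dec_induct)
  case base then show ?case using Mi by simp
next
  case (step m)
  have "stp s M (Suc m)" using st step by auto
  moreover have "s (Suc m) \<le> s m" using step.prems(2)[rule_format, of "Suc m"] step.hyps by auto
  moreover have "M m" using step by auto
  ultimately show ?case unfolding stp_def by auto
qed

lemma goL:
  assumes st: "\<forall>j. 1 \<le> j \<longrightarrow> j \<le> n \<longrightarrow> stp s M j" and ij: "j \<le> i" "i \<le> n" and Mi: "M i"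
    and mono: "\<forall>l. j < l \<longrightarrow> l \<le> i \<longrightarrow> s (l-1) \<le> s l"
  shows "M j"
  using ij(1) mono
proof (induction j rule: inc_induct)
  case base then show ?case using Mi by simp
next
  case (step m)
  have "stp s M (Suc m)" using st step ij by auto
  moreover have "s m \<le> s (Suc m)" using step.prems step.hyps by auto
  moreover have "M (Suc m)" using step by auto
  ultimately show ?case unfolding stp_def by auto
qed

lemma arithA:
  fixes s :: "nat \<Rightarrow> int" and M :: "nat \<Rightarrow> bool"
  assumes n5: "n \<le> 5" and s0: "s 0 = 0" and sn: "s n = 0"
    and st: "\<forall>j. 1 \<le> j \<longrightarrow> j \<le> n \<longrightarrow> stp s M j"
    and i1: "i1 < n" "s i1 = 2" "M i1"
    and j: "j < n"
  shows "M j"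
proof (cases "i1 \<le> j")
  case True
  show ?thesis
  proof (rule goR[OF st True _ i1(3)])
    show "j \<le> n" using j by simp
    show "\<forall>l. i1 < l \<longrightarrow> l \<le> j \<longrightarrow> s l \<le> s (l - 1)"
    proof (intro allI impI)
      fix l assume l: "i1 < l" "l \<le> j"
      have a: "\<bar>s n - s l\<bar> \<le> int (n - l)" using lip[OF st, of l n] l j by auto
      have b: "\<bar>s (l-1) - s i1\<bar> \<le> int (l - 1 - i1)" using lip[OF st, of i1 "l-1"] l j by auto
      have c: "\<bar>s i1 - s 0\<bar> \<le> int (i1 - 0)" using lip[OF st, of 0 i1] i1 by auto
      have d: "\<bar>s l - s (l-1)\<bar> \<le> 1" using st[rule_format, of l] l j unfolding stp_def by auto
      show "s l \<le> s (l - 1)" using a b c d i1 l j n5 s0 sn by auto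
    qed
  qed
next
  case False
  show ?thesis
  proof (rule goL[OF st _ _ i1(3)])
    show "j \<le> i1" "i1 \<le> n" using False i1 by auto
    show "\<forall>l. j < l \<longrightarrow> l \<le> i1 \<longrightarrow> s (l - 1) \<le> s l"
    proof (intro allI impI)
      fix l assume l: "j < l" "l \<le> i1"
      have a: "\<bar>s (l-1) - s 0\<bar> \<le> int (l - 1 - 0)" using lip[OF st, of 0 "l-1"] l i1 by auto
      have b: "\<bar>s i1 - s l\<bar> \<le> int (i1 - l)" using lip[OF st, of l i1] l i1 by auto
      have c: "\<bar>s n - s i1\<bar> \<le> int (n - i1)" using lip[OF st, of i1 n] i1 by auto
      have d: "\<bar>s l - s (l-1)\<bar> \<le> 1" using st[rule_format, of l] l i1 unfolding stp_def by auto
      show "s (l - 1) \<le> s l" using a b c d i1 l j n5 s0 sn by auto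
    qed
  qed
qed

lemma run:
  assumes st: "\<forall>j. 1 \<le> j \<longrightarrow> j \<le> n \<longrightarrow> stp s M j" and ab: "a \<le> b" "b \<le> n"
    and one: "\<forall>l. a \<le> l \<longrightarrow> l \<le> b \<longrightarrow> s l = 1"
  shows "M a \<longleftrightarrow> M b"
  using ab one
proof (induction b rule: dec_induct)
  case base then show ?case by simp
next
  case (step m)
  have "stp s M (Suc m)" using st step by auto
  moreover have "s m = 1" "s (Suc m) = 1" using step by auto
  ultimately have "M m \<longleftrightarrow> M (Suc m)" unfolding stp_def by auto
  thus ?case using step by auto
qed

lemma run':
  assumes st: "\<forall>j. 1 \<le> j \<longrightarrow> j \<le> n \<longrightarrow> stp s M j" and ab: "a \<le> n" "b \<le> n"
    and one: "\<forall>l. min a b \<le> l \<longrightarrow> l \<le> max a b \<longrightarrow> s l = 1"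
  shows "M a \<longleftrightarrow> M b"
proof (cases "a \<le> b")
  case True thus ?thesis using run[OF st True ab(2)] one by auto
next
  case False thus ?thesis using run[OF st _ ab(1), of b] one by auto
qed

lemma arithB:
  fixes s :: "nat \<Rightarrow> int" and Mu Mw :: "nat \<Rightarrow> bool"
  assumes n5: "n \<le> 5" and s0: "s 0 = 0"
    and stu: "\<forall>j. 1 \<le> j \<longrightarrow> j \<le> n \<longrightarrow> stp s Mu j"
    and stw: "\<forall>j. 1 \<le> j \<longrightarrow> j \<le> n \<longrightarrow> stp s Mw j"
    and i1: "i1 < n" "s i1 = 1" "Mu i1"
    and i2: "i2 < n" "s i2 = 1" "\<not> Mu i2" "Mw i2"
    and j: "j < n" "s j = 1"
  shows "Mu j \<or> Mw j"
proof (rule ccontr)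
  assume nj: "\<not> (Mu j \<or> Mw j)"
  have "\<not> (\<forall>l. min i1 i2 \<le> l \<longrightarrow> l \<le> max i1 i2 \<longrightarrow> s l = 1)"
    using run'[OF stu, of i1 i2] i1 i2 by auto
  then obtain z3 where z3: "min i1 i2 \<le> z3" "z3 \<le> max i1 i2" "s z3 \<noteq> 1" by auto
  have "\<not> (\<forall>l. min i1 j \<le> l \<longrightarrow> l \<le> max i1 j \<longrightarrow> s l = 1)"
    using run'[OF stu, of i1 j] i1 j nj by auto
  then obtain z1 where z1: "min i1 j \<le> z1" "z1 \<le> max i1 j" "s z1 \<noteq> 1" by auto
  have "\<not> (\<forall>l. min i2 j \<le> l \<longrightarrow> l \<le> max i2 j \<longrightarrow> s l = 1)"
    using run'[OF stw, of i2 j] i2 j nj by auto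
  then obtain z2 where z2: "min i2 j \<le> z2" "z2 \<le> max i2 j" "s z2 \<noteq> 1" by auto
  have "z1 \<noteq> i1" "z1 \<noteq> j" "z2 \<noteq> i2" "z2 \<noteq> j" "z3 \<noteq> i1" "z3 \<noteq> i2"
    using z1 z2 z3 i1 i2 j by auto
  moreover have "i1 \<noteq> 0" "i2 \<noteq> 0" "j \<noteq> 0" using s0 i1(2) i2(2) j(2) by (metis zero_neq_one)+
  ultimately show False using z1(1,2) z2(1,2) z3(1,2) i1(1) i2(1) j(1) n5 by (simp add: min_def max_def split: if_splits)
qed

lemma stp_num:
  fixes D0 D1 a A0 A1 B0 B1 F0 F1 :: nat
  assumes "D1 = D0 + a" "a \<le> 2"
    "A0 \<le> A1" "A1 \<le> A0 + 1" "A0 + a \<le> A1 + 1" "A1 \<le> A0 + a"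
    "B0 \<le> B1" "B1 \<le> B0 + 1" "B0 + a \<le> B1 + 1" "B1 \<le> B0 + a"
    "F0 \<le> F1" "F1 \<le> F0 + 1" "F0 + a \<le> F1 + 1" "F1 \<le> F0 + a"
  shows "int D1 - 2 * int (min A1 B1) \<le> int D0 - 2 * int (min A0 B0) + 1 \<and>
         int D0 - 2 * int (min A0 B0) \<le> int D1 - 2 * int (min A1 B1) + 1 \<and>
         (int D1 - 2 * int (min A1 B1) \<le> int D0 - 2 * int (min A0 B0) \<longrightarrow>
            D0 \<le> F0 + min A0 B0 \<longrightarrow> D1 \<le> F1 + min A1 B1) \<and>
         (int D0 - 2 * int (min A0 B0) \<le> int D1 - 2 * int (min A1 B1) \<longrightarrow>
            D1 \<le> F1 + min A1 B1 \<longrightarrow> D0 \<le> F0 + min A0 B0)"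
  using assms unfolding min_def by (cases "a = 0"; cases "a = 1"; auto)
lemma arithC:
  assumes st: "\<forall>j. 1 \<le> j \<longrightarrow> j \<le> n \<longrightarrow> stp s M j" and n5: "n \<le> 5"
    and s0: "s 0 = 0" and sn: "s n = 0" and j: "j \<le> n"
  shows "s j \<le> 2"
proof -
  have a: "\<bar>s j - s 0\<bar> \<le> int (j - 0)" using lip[OF st, of 0 j] j by auto
  have b: "\<bar>s n - s j\<bar> \<le> int (n - j)" using lip[OF st, of j n] j by auto
  show ?thesis using a b s0 sn n5 j by auto
qed

lemma mdet_scal [simp]: "mdet (c \<cdot>\<^sub>m 1\<^sub>m 2) = c * c" by (simp add: mdet_def)
lemma mdet_one [simp]: "mdet (1\<^sub>m 2) = 1" by (simp add: mdet_def)

lemma scal_mv: "v \<in> carrier_vec 2 \<Longrightarrow> ((c::complex fps) \<cdot>\<^sub>m 1\<^sub>m 2) *\<^sub>v v = c \<cdot>\<^sub>v v"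
  by (intro eq_vecI) (auto simp: mv0 mv1 less_2_cases_iff)

lemma sm_e [simp]: "(c \<cdot>\<^sub>v e0)$0 = c" "(c \<cdot>\<^sub>v e0)$Suc 0 = 0" "(c \<cdot>\<^sub>v e1)$0 = 0" "(c \<cdot>\<^sub>v e1)$Suc 0 = c"
  by (simp_all add: e0_def e1_def)

lemma stepfacts:
  assumes A: "A \<in> carrier_mat 2 2" and B: "B \<in> carrier_mat 2 2"
    and AB: "A * B = fps_X \<cdot>\<^sub>m 1\<^sub>m 2" and BA: "B * A = fps_X \<cdot>\<^sub>m 1\<^sub>m 2"
    and Pp: "Pp \<in> carrier_mat 2 2" and dP: "mdet Pp \<noteq> 0"
  shows "mdet (A * Pp) \<noteq> 0 \<and> subdegree (mdet Pp) \<le> subdegree (mdet (A*Pp)) \<and>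
    subdegree (mdet (A*Pp)) \<le> subdegree (mdet Pp) + 2 \<and>
    (\<forall>v \<in> carrier_vec 2. nzv v \<longrightarrow> cv (Pp *\<^sub>v v) \<le> cv ((A*Pp) *\<^sub>v v) \<and>
       cv ((A*Pp) *\<^sub>v v) \<le> cv (Pp *\<^sub>v v) + 1 \<and>
       cv (Pp *\<^sub>v v) + (subdegree (mdet (A*Pp)) - subdegree (mdet Pp)) \<le> cv ((A*Pp) *\<^sub>v v) + 1 \<and>
       cv ((A*Pp) *\<^sub>v v) \<le> cv (Pp *\<^sub>v v) + (subdegree (mdet (A*Pp)) - subdegree (mdet Pp)))"
proof -
  have "nzv e0" by (simp add: nzv_def)
  hence dA: "mdet A \<noteq> 0" "subdegree (mdet A) \<le> 2" using step_vec[OF A B AB BA e0_car] by auto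
  have md: "mdet (A*Pp) = mdet A * mdet Pp" using mdet_mult[OF A Pp] .
  hence nz: "mdet (A*Pp) \<noteq> 0" using dA dP by simp
  have sd: "subdegree (mdet (A*Pp)) = subdegree (mdet A) + subdegree (mdet Pp)"
    using md dA dP by simp
  have V: "cv (Pp *\<^sub>v v) \<le> cv ((A*Pp) *\<^sub>v v) \<and>
       cv ((A*Pp) *\<^sub>v v) \<le> cv (Pp *\<^sub>v v) + 1 \<and>
       cv (Pp *\<^sub>v v) + (subdegree (mdet (A*Pp)) - subdegree (mdet Pp)) \<le> cv ((A*Pp) *\<^sub>v v) + 1 \<and>
       cv ((A*Pp) *\<^sub>v v) \<le> cv (Pp *\<^sub>v v) + (subdegree (mdet (A*Pp)) - subdegree (mdet Pp))"
    if v: "v \<in> carrier_vec 2" and nv: "nzv v" for v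
  proof -
    have zc: "Pp *\<^sub>v v \<in> carrier_vec 2" using Pp v by simp
    have nzz: "nzv (Pp *\<^sub>v v)" using nz_mv[OF Pp dP v nv] .
    have eq: "(A*Pp) *\<^sub>v v = A *\<^sub>v (Pp *\<^sub>v v)" using A Pp v by simp
    show ?thesis using step_vec[OF A B AB BA zc nzz] unfolding eq sd by auto
  qed
  show ?thesis using nz sd dA V by auto
qed

lemma core:
  fixes P :: "nat \<Rightarrow> complex fps mat" and n d :: nat
  assumes n5: "n \<le> 5" and n1: "1 \<le> n"
    and car: "\<forall>j\<le>n. P j \<in> carrier_mat 2 2"
    and P0: "P 0 = 1\<^sub>m 2" and Pn: "P n = fps_X ^ d \<cdot>\<^sub>m 1\<^sub>m 2"
    and stepM: "\<forall>j. 1 \<le> j \<longrightarrow> j \<le> n \<longrightarrow> (\<exists>A B. A \<in> carrier_mat 2 2 \<and> B \<in> carrier_mat 2 2 \<and>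
        A * B = fps_X \<cdot>\<^sub>m 1\<^sub>m 2 \<and> B * A = fps_X \<cdot>\<^sub>m 1\<^sub>m 2 \<and> P j = A * P (j-1))"
  shows "\<exists>u w. u \<in> carrier_vec 2 \<and> w \<in> carrier_vec 2 \<and> fps_nth (det2 u w) 0 \<noteq> 0 \<and>
     (\<forall>i<n. subdegree (mdet (P i)) \<le> cv (P i *\<^sub>v u) + cv (P i *\<^sub>v w))"
proof -
  define D where "D i = subdegree (mdet (P i))" for i
  define F where "F v i = cv (P i *\<^sub>v v)" for v i
  define E where "E i = min (F e0 i) (F e1 i)" for i
  define s where "s i = int (D i) - 2 * int (E i)" for i
  define M where "M v i = (D i \<le> F v i + E i)" for v i
  have dnz: "mdet (P j) \<noteq> 0" if "j \<le> n" for j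
    using that
  proof (induction j)
    case 0 then show ?case using P0 by simp
  next
    case (Suc j)
    have "\<exists>A B. A \<in> carrier_mat 2 2 \<and> B \<in> carrier_mat 2 2 \<and>
        A * B = fps_X \<cdot>\<^sub>m 1\<^sub>m 2 \<and> B * A = fps_X \<cdot>\<^sub>m 1\<^sub>m 2 \<and> P (Suc j) = A * P (Suc j - 1)"
      using stepM[rule_format, of "Suc j"] Suc.prems by simp
    then obtain A B where AB: "A \<in> carrier_mat 2 2" "B \<in> carrier_mat 2 2" "A * B = fps_X \<cdot>\<^sub>m 1\<^sub>m 2"
      "B * A = fps_X \<cdot>\<^sub>m 1\<^sub>m 2" "P (Suc j) = A * P j" by auto
    have cj: "P j \<in> carrier_mat 2 2" using car Suc.prems by simp
    have dj: "mdet (P j) \<noteq> 0" using Suc by simp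
    show ?case using stepfacts[OF AB(1-4) cj dj] AB(5) by simp
  qed
  have nzP: "nzv (P j *\<^sub>v v)" if "j \<le> n" "v \<in> carrier_vec 2" "nzv v" for j v
    using nz_mv[of "P j" v] car dnz that by auto
  have SF: "D (j-1) \<le> D j \<and> D j \<le> D (j-1) + 2 \<and>
     (\<forall>v \<in> carrier_vec 2. nzv v \<longrightarrow> F v (j-1) \<le> F v j \<and> F v j \<le> F v (j-1) + 1 \<and>
        F v (j-1) + (D j - D (j-1)) \<le> F v j + 1 \<and> F v j \<le> F v (j-1) + (D j - D (j-1)))"
    if jj: "1 \<le> j" "j \<le> n" for j
  proof -
    obtain A B where AB: "A \<in> carrier_mat 2 2" "B \<in> carrier_mat 2 2" "A * B = fps_X \<cdot>\<^sub>m 1\<^sub>m 2"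
      "B * A = fps_X \<cdot>\<^sub>m 1\<^sub>m 2" "P j = A * P (j-1)" using stepM[rule_format, OF jj] by blast
    have "P (j-1) \<in> carrier_mat 2 2" "mdet (P (j-1)) \<noteq> 0" using car dnz jj by auto
    from stepfacts[OF AB(1-4) this] show ?thesis unfolding D_def F_def AB(5) by blast
  qed
  have nze: "nzv e0" "nzv e1" by (simp_all add: nzv_def)
  have pe: "prim e0" "prim e1" by (simp_all add: prim_def)
  have stpM: "\<forall>j. 1 \<le> j \<longrightarrow> j \<le> n \<longrightarrow> stp s (M u) j" if u: "u \<in> carrier_vec 2" "nzv u" for u
  proof (intro allI impI)
    fix j assume j: "1 \<le> j" "j \<le> n"
    have S: "D (j-1) \<le> D j" "D j \<le> D (j-1) + 2" using SF[OF j] by auto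
    have Fe0: "F e0 (j-1) \<le> F e0 j \<and> F e0 j \<le> F e0 (j-1) + 1 \<and>
        F e0 (j-1) + (D j - D (j-1)) \<le> F e0 j + 1 \<and> F e0 j \<le> F e0 (j-1) + (D j - D (j-1))"
      using SF[OF j] nze by auto
    have Fe1: "F e1 (j-1) \<le> F e1 j \<and> F e1 j \<le> F e1 (j-1) + 1 \<and>
        F e1 (j-1) + (D j - D (j-1)) \<le> F e1 j + 1 \<and> F e1 j \<le> F e1 (j-1) + (D j - D (j-1))"
      using SF[OF j] nze by auto
    have Fu: "F u (j-1) \<le> F u j \<and> F u j \<le> F u (j-1) + 1 \<and>
        F u (j-1) + (D j - D (j-1)) \<le> F u j + 1 \<and> F u j \<le> F u (j-1) + (D j - D (j-1))"
      using SF[OF j] u by auto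
    have "D j = D (j-1) + (D j - D (j-1))" "D j - D (j-1) \<le> 2" using S by auto
    from stp_num[OF this, of "F e0 (j-1)" "F e0 j" "F e1 (j-1)" "F e1 j" "F u (j-1)" "F u j"] Fe0 Fe1 Fu
    show "stp s (M u) j" unfolding stp_def s_def M_def E_def by auto
  qed
  have D0: "D 0 = 0" unfolding D_def using P0 by simp
  have F0: "F v 0 = 0" if "prim v" "v \<in> carrier_vec 2" for v
    unfolding F_def using P0 cv_prim that by simp
  have s0: "s 0 = 0" unfolding s_def E_def using D0 F0 pe by simp
  have Dn: "D n = 2 * d" unfolding D_def using Pn by (simp add: fps_X_power_subdegree power_add[symmetric] mult_2)
  have Fn: "F e0 n = d" "F e1 n = d" unfolding F_def Pn scal_mv[OF e0_car] scal_mv[OF e1_car]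
    by (simp_all add: cv_def cont2_def fps_X_power_subdegree del: power_Suc)
  have sn: "s n = 0" unfolding s_def E_def using Dn Fn by simp
  have dete: "fps_nth (det2 e0 e1) 0 \<noteq> 0" by (simp add: det2_def)
  have sge: "2 * E j \<le> D j" if "j \<le> n" for j
  proof -
    have "F e0 j + F e1 j \<le> D j" unfolding F_def D_def
      using det_bound[of "P j" e0 e1] car dnz[OF that] that dete nzP[OF that e0_car nze(1)] nzP[OF that e1_car nze(2)] by simp
    thus ?thesis unfolding E_def by auto
  qed
  have mdE: "mdv (E j) (P j)" if "j \<le> n" for j
    using mdv_iff[of "P j" "E j"] car nzP[OF that e0_car] nzP[OF that e1_car] nze that
    unfolding E_def F_def by auto
  have EF: "E j \<le> F v j" if "j \<le> n" "v \<in> carrier_vec 2" "nzv v" for j v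
    using mdv_mv0[of "P j" v "E j"] mdE[OF that(1)] car that cv_le[OF nzP[OF that]]
    unfolding F_def by auto
  have s_le2: "s j \<le> 2" if "j \<le> n" for j
    using arithC[OF stpM[OF e0_car nze(1)] n5 s0 sn that] .
  have s_ge0: "0 \<le> s j" if "j \<le> n" for j using sge[OF that] unfolding s_def by simp
  have M0: "M v j" if "j \<le> n" "s j = 0" "v \<in> carrier_vec 2" "nzv v" for v j
    using EF[OF that(1,3,4)] that(2) unfolding M_def s_def by simp
  have compl: "\<exists>w. w \<in> carrier_vec 2 \<and> fps_nth (det2 u w) 0 \<noteq> 0 \<and> prim w" if "prim u" for u
  proof (cases "fps_nth (u$0) 0 = 0")
    case True
    hence "fps_nth (u$1) 0 \<noteq> 0" using that unfolding prim_def by auto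
    thus ?thesis using True pe by (intro exI[of _ e0]) (simp add: det2_def)
  next
    case False
    thus ?thesis using pe by (intro exI[of _ e1]) (simp add: det2_def)
  qed
  have fin: "\<exists>u w. u \<in> carrier_vec 2 \<and> w \<in> carrier_vec 2 \<and> fps_nth (det2 u w) 0 \<noteq> 0 \<and>
     (\<forall>i<n. D i \<le> F u i + F w i)" if u: "u \<in> carrier_vec 2" "prim u" and all: "\<forall>j<n. M u j" for u
  proof -
    obtain w where w: "w \<in> carrier_vec 2" "fps_nth (det2 u w) 0 \<noteq> 0" "prim w" using compl[OF u(2)] by blast
    have "D i \<le> F u i + F w i" if i: "i < n" for i
    proof -
      have "E i \<le> F w i" using EF[of i w] w(1) prim_nzv[OF w(3)] i by simp
      moreover have "D i \<le> F u i + E i" using all i unfolding M_def by simp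
      ultimately show ?thesis by simp
    qed
    thus ?thesis using u w by blast
  qed
  have goal: "\<exists>u w. u \<in> carrier_vec 2 \<and> w \<in> carrier_vec 2 \<and> fps_nth (det2 u w) 0 \<noteq> 0 \<and>
     (\<forall>i<n. D i \<le> F u i + F w i)"
  proof (cases "\<exists>i1<n. s i1 = 2")
    case True
    then obtain i1 where i1: "i1 < n" "s i1 = 2" by blast
    have Lh: "P i1 \<in> carrier_mat 2 2" "mdet (P i1) \<noteq> 0" "nzv (P i1 *\<^sub>v e0)" "nzv (P i1 *\<^sub>v e1)"
      using car dnz nzP nze i1 by auto
    obtain u where u: "u \<in> carrier_vec 2" "prim u" "D i1 \<le> F u i1 + E i1"
      using L_exists[OF Lh] unfolding D_def F_def E_def by blast
    have "\<forall>j<n. M u j"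
      using arithA[OF n5 s0 sn stpM[OF u(1) prim_nzv[OF u(2)]] i1] u(3) unfolding M_def by blast
    thus ?thesis using fin u by blast
  next
    case no2: False
    show ?thesis
    proof (cases "\<exists>i1<n. s i1 = 1")
      case False
      have "M e0 j" if j: "j < n" for j
      proof -
        have "s j \<le> 2" "0 \<le> s j" using s_le2[of j] s_ge0[of j] j by simp_all
        moreover have "s j \<noteq> 2" "s j \<noteq> 1" using no2 False j by auto
        ultimately have "s j = 0" by simp
        thus ?thesis using M0[of j e0] j nze by simp
      qed
      hence "\<forall>j<n. M e0 j" by blast
      thus ?thesis using fin[OF e0_car pe(1)] by blast
    next
      case True
      then obtain i1 where i1: "i1 < n" "s i1 = 1" by blast
    have Lh: "P i1 \<in> carrier_mat 2 2" "mdet (P i1) \<noteq> 0" "nzv (P i1 *\<^sub>v e0)" "nzv (P i1 *\<^sub>v e1)"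
      using car dnz nzP nze i1 by auto
    obtain u where u: "u \<in> carrier_vec 2" "prim u" "D i1 \<le> F u i1 + E i1"
      using L_exists[OF Lh] unfolding D_def F_def E_def by blast
      show ?thesis
      proof (cases "\<forall>j<n. M u j")
        case True thus ?thesis using fin u by blast
      next
        case False
        then obtain i2 where i2: "i2 < n" "\<not> M u i2" by blast
        have "s i2 \<noteq> 0" using M0[of i2 u] i2 u(1) prim_nzv[OF u(2)] by auto
        moreover have "s i2 \<le> 2" "0 \<le> s i2" using s_le2[of i2] s_ge0[of i2] i2 by simp_all
        moreover have "s i2 \<noteq> 2" using no2 i2 by auto
        ultimately have si2: "s i2 = 1" by simp
        have Lh: "P i2 \<in> carrier_mat 2 2" "mdet (P i2) \<noteq> 0" "nzv (P i2 *\<^sub>v e0)" "nzv (P i2 *\<^sub>v e1)"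
          using car dnz nzP nze i2 by auto
        obtain w where w: "w \<in> carrier_vec 2" "prim w" "D i2 \<le> F w i2 + E i2"
          using L_exists[OF Lh] unfolding D_def F_def E_def by blast
        have dw: "fps_nth (det2 u w) 0 \<noteq> 0"
        proof
          assume dz: "fps_nth (det2 u w) 0 = 0"
          have "Suc (E i2) \<le> F w i2" using w(3) si2 unfolding s_def by simp
          hence "vdv (Suc (E i2)) (P i2 *\<^sub>v w)"
            using cv_iff[OF nzP[of i2 w]] i2 w prim_nzv unfolding F_def by auto
          from closure_lem[of "P i2" "E i2" u w, OF _ mdE _ _ _ dz this] car i2 u w
          have "vdv (Suc (E i2)) (P i2 *\<^sub>v u)" by auto
          hence "Suc (E i2) \<le> F u i2" using cv_iff[OF nzP[of i2 u]] i2 u prim_nzv unfolding F_def by auto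
          thus False using i2 si2 unfolding M_def s_def by simp
        qed
        have "D j \<le> F u j + F w j" if j: "j < n" for j
        proof -
          have "s j \<le> 2" "0 \<le> s j" using s_le2[of j] s_ge0[of j] j by simp_all
          moreover have "s j \<noteq> 2" using no2 j by auto
          ultimately have "s j = 0 \<or> s j = 1" by auto
          moreover have "s j = 1 \<Longrightarrow> M u j \<or> M w j"
            using arithB[OF n5 s0 stpM[OF u(1) prim_nzv[OF u(2)]] stpM[OF w(1) prim_nzv[OF w(2)]]
                i1 _ i2(1) si2 i2(2) _ j] u(3) w(3) unfolding M_def by blast
          ultimately have "M u j \<or> M w j" using M0 j u w prim_nzv by auto
          moreover have "E j \<le> F u j" "E j \<le> F w j" using EF[of j u] EF[of j w] u(1) w(1) j
            prim_nzv[OF u(2)] prim_nzv[OF w(2)] by simp_all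
          ultimately show ?thesis unfolding M_def by auto
        qed
        thus ?thesis using u w dw by blast
      qed
    qed
  qed
  thus ?thesis unfolding D_def F_def .
qed

lemma xpath_car: assumes n: "0 < n" and c: "\<forall>j<n. X j \<in> carrier_mat r r" shows "xpath n r X i m \<in> carrier_mat r r"
proof (induction m)
  case 0 thus ?case by simp
next
  case (Suc m)
  have "X ((i + m + 1) mod n) \<in> carrier_mat r r" using c n by simp
  thus ?case using Suc mult_carrier_mat by simp
qed

lemma ypath_car: assumes n: "0 < n" and c: "\<forall>j<n. Y j \<in> carrier_mat r r" shows "ypath n r Y i m \<in> carrier_mat r r"
proof (induction m)
  case 0 thus ?case by simp
next
  case (Suc m)
  have "Y ((i + (n - m mod n)) mod n) \<in> carrier_mat r r" using c n by simp
  thus ?case using Suc mult_carrier_mat by simp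
qed

lemma xpath_add:
  assumes n: "0 < n" and c: "\<forall>j<n. X j \<in> carrier_mat r r"
  shows "xpath n r X i (a + b) = xpath n r X ((i + a) mod n) b * xpath n r X i a"
proof (induction b)
  case 0 thus ?case using left_mult_one_mat[OF xpath_car[OF n c, of i a]] by simp
next
  case (Suc b)
  have idx: "((i + a) mod n + b + 1) mod n = (i + (a + b) + 1) mod n"
    by (metis add.assoc mod_add_left_eq)
  have "xpath n r X i (a + Suc b) = X ((i + (a + b) + 1) mod n) * xpath n r X i (a + b)" by simp
  also have "\<dots> = X ((i + (a + b) + 1) mod n) * (xpath n r X ((i + a) mod n) b * xpath n r X i a)"
    using Suc by simp
  also have "\<dots> = (X ((i + (a + b) + 1) mod n) * xpath n r X ((i + a) mod n) b) * xpath n r X i a"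
    using xpath_car[OF n c] c n by (simp add: assoc_mult_mat[symmetric, of _ r r _ r _ r])
  also have "\<dots> = xpath n r X ((i + a) mod n) (Suc b) * xpath n r X i a" using idx by simp
  finally show ?case .
qed

lemma xpath_one: assumes n: "0 < n" and c: "\<forall>j<n. X j \<in> carrier_mat r r" shows "xpath n r X s 1 = X ((s + 1) mod n)"
proof -
  have "X ((s + 1) mod n) \<in> carrier_mat r r" using c n by simp
  thus ?thesis using right_mult_one_mat by simp
qed

definition bk :: "nat \<Rightarrow> nat \<Rightarrow> nat \<Rightarrow> nat" where "bk n i j = (i + (n - j mod n)) mod n"

lemma bk_int: assumes "0 < n" shows "int (bk n i j) = (int i - int j) mod int n"
proof -
  have "j mod n < n" using assms by simp
  hence "int (n - j mod n) = int n - int j mod int n" by (simp add: of_nat_diff zmod_int)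
  hence "int (bk n i j) = (int i + (int n - int j mod int n)) mod int n"
    unfolding bk_def by (simp add: zmod_int)
  also have "\<dots> = (int i - int j mod int n) mod int n"
    by (metis add.commute add_diff_eq diff_add_eq mod_add_self1)
  also have "\<dots> = (int i - int j) mod int n" by (simp add: mod_diff_right_eq)
  finally show ?thesis .
qed

lemma bk_suc: assumes "0 < n" shows "(bk n i (Suc j) + 1) mod n = bk n i j"
proof -
  have "int ((bk n i (Suc j) + 1) mod n) = ((int i - int j - 1) mod int n + 1) mod int n"
    using bk_int[OF assms, of i "Suc j"] by (simp add: zmod_int algebra_simps)
  also have "\<dots> = (int i - int j) mod int n" by (simp add: mod_add_left_eq)
  also have "\<dots> = int (bk n i j)" using bk_int[OF assms] by simp
  finally show ?thesis by simp
qed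

lemma smult_one_mat2: "(1::complex fps) \<cdot>\<^sub>m 1\<^sub>m 2 = 1\<^sub>m 2"
  by (intro eq_matI) auto

lemma smult_smult2: "(a::complex fps) \<cdot>\<^sub>m (b \<cdot>\<^sub>m A) = (a * b) \<cdot>\<^sub>m A"
  by (intro eq_matI) auto

lemma xy_path:
  assumes n: "0 < n" and cX: "\<forall>j<n. X j \<in> carrier_mat 2 2" and cY: "\<forall>j<n. Y j \<in> carrier_mat 2 2"
    and XY: "\<forall>j<n. X j * Y j = fps_X \<cdot>\<^sub>m 1\<^sub>m 2"
  shows "xpath n 2 X (bk n i j) j * ypath n 2 Y i j = fps_X ^ j \<cdot>\<^sub>m 1\<^sub>m 2"
proof (induction j)
  case 0 show ?case by (simp add: smult_one_mat2)
next
  case (Suc j)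
  define b where "b = bk n i j"
  define b' where "b' = bk n i (Suc j)"
  have bn: "b < n" unfolding b_def bk_def using n by simp
  have yb: "(i + (n - j mod n)) mod n = b" unfolding b_def bk_def by simp
  have xs: "xpath n 2 X b' (Suc j) = xpath n 2 X b j * X b"
  proof -
    have "xpath n 2 X b' (Suc j) = xpath n 2 X b' (1 + j)" by simp
    also have "\<dots> = xpath n 2 X ((b' + 1) mod n) j * xpath n 2 X b' 1" using xpath_add[OF n cX] by blast
    also have "\<dots> = xpath n 2 X b j * X b"
    proof -
      have x1: "xpath n 2 X b' 1 = X ((b' + 1) mod n)" by (rule xpath_one[OF n cX])
      have idx: "(b' + 1) mod n = b" using bk_suc[OF n, of i j] b_def b'_def by simp
      show ?thesis by (simp only: x1 idx)
    qed
    finally show ?thesis .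
  qed
  have ys: "ypath n 2 Y i (Suc j) = Y b * ypath n 2 Y i j" using yb by simp
  have cM: "xpath n 2 X b j \<in> carrier_mat 2 2" using xpath_car[OF n cX] .
  have cN: "ypath n 2 Y i j \<in> carrier_mat 2 2" using ypath_car[OF n cY] .
  have cXb: "X b \<in> carrier_mat 2 2" "Y b \<in> carrier_mat 2 2" using cX cY bn by auto
  have "xpath n 2 X b' (Suc j) * ypath n 2 Y i (Suc j)
      = xpath n 2 X b j * ((X b * Y b) * ypath n 2 Y i j)"
    unfolding xs ys using cM cN cXb by (simp add: assoc_mult_mat[of _ 2 2 _ 2 _ 2])
  also have "\<dots> = xpath n 2 X b j * (fps_X \<cdot>\<^sub>m ypath n 2 Y i j)"
    using XY bn cN by (simp add: mult_smult_assoc_mat[OF one_carrier_mat cN])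
  also have "\<dots> = fps_X \<cdot>\<^sub>m (xpath n 2 X b j * ypath n 2 Y i j)"
    using mult_smult_distrib[OF cM cN] by simp
  also have "\<dots> = fps_X ^ Suc j \<cdot>\<^sub>m 1\<^sub>m 2" using Suc b_def by (simp add: smult_smult2)
  finally show ?case unfolding b'_def .
qed

lemma det2_add: "a \<in> carrier_vec 2 \<Longrightarrow> b \<in> carrier_vec 2 \<Longrightarrow> det2 (a + b) p = det2 a p + det2 b p"
  unfolding det2_def by (simp add: algebra_simps)
lemma det2_smult: "a \<in> carrier_vec 2 \<Longrightarrow> det2 (c \<cdot>\<^sub>v a) p = c * det2 a p"
  unfolding det2_def by (simp add: algebra_simps)
lemma det2_smult2: "p \<in> carrier_vec 2 \<Longrightarrow> det2 a (c \<cdot>\<^sub>v p) = c * det2 a p"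
  unfolding det2_def by (simp add: algebra_simps)
lemma det2_zero: "det2 (0\<^sub>v 2) p = 0" unfolding det2_def by simp
lemma det2_self: "det2 a a = 0" unfolding det2_def by (simp add: algebra_simps)

lemma smat_mv: assumes "Q \<in> carrier_mat 2 2" "u \<in> carrier_vec 2"
  shows "((c::complex fps) \<cdot>\<^sub>m Q) *\<^sub>v u = c \<cdot>\<^sub>v (Q *\<^sub>v u)"
  using assms by (intro eq_vecI) (auto simp: mult_mat_vec_def scalar_prod_def algebra_simps sum_distrib_left)

definition NS :: "complex fps vec \<Rightarrow> complex fps vec set" where
  "NS p = {v \<in> carrier_vec 2. det2 v p = 0}"

lemma submod_NS: "submod 2 (NS p)"
  unfolding submod_def NS_def by (auto simp: det2_zero det2_add det2_smult)

lemma aux_sub: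
  fixes a b c d :: "'a::ab_group_add"
  assumes "a + b = c + d" shows "a - c = d - b"
proof -
  have "a - c = (a + b) - (c + b)" by simp
  also have "\<dots> = (c + d) - (c + b)" using assms by simp
  also have "\<dots> = d - b" by simp
  finally show ?thesis .
qed

lemma uniq2:
  assumes p: "p \<in> carrier_vec 2" and q: "q \<in> carrier_vec 2" and np: "nzv p" and nq: "nzv q"
    and d0: "det2 p q \<noteq> 0" and dl: "subdegree (det2 p q) \<le> cv p + cv q"
    and v: "v \<in> carrier_vec 2"
  shows "\<exists>!pr. fst pr \<in> NS p \<and> snd pr \<in> NS q \<and> v = fst pr + snd pr"
proof -
  define a where "a = cv p"
  define b where "b = cv q"
  have sa: "sdv a (p$0)" "sdv a (p$1)" using cv_dv[OF np] unfolding a_def vdv_def by auto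
  have sb: "sdv b (q$0)" "sdv b (q$1)" using cv_dv[OF nq] unfolding b_def vdv_def by auto
  define p' where "p' = vec 2 (\<lambda>k. fps_shift a (p$k))"
  define q' where "q' = vec 2 (\<lambda>k. fps_shift b (q$k))"
  have p'c: "p' \<in> carrier_vec 2" and q'c: "q' \<in> carrier_vec 2" by (simp_all add: p'_def q'_def)
  have pe: "p$0 = fps_X^a * p'$0" "p$1 = fps_X^a * p'$1"
    using shift_eq[OF sa(1)] shift_eq[OF sa(2)] by (simp_all add: p'_def mult.commute)
  have qe: "q$0 = fps_X^b * q'$0" "q$1 = fps_X^b * q'$1"
    using shift_eq[OF sb(1)] shift_eq[OF sb(2)] by (simp_all add: q'_def mult.commute)
  define \<delta> where "\<delta> = det2 p' q'"
  have dpq: "det2 p q = fps_X^(a+b) * \<delta>"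
    unfolding det2_def \<delta>_def pe qe by (simp add: power_add algebra_simps)
  have dn: "\<delta> \<noteq> 0" using d0 dpq by auto
  have "subdegree (det2 p q) = a + b + subdegree \<delta>"
    using dpq dn by (simp add: fps_X_power_subdegree)
  hence "subdegree \<delta> = 0" using dl a_def b_def by simp
  hence d00: "fps_nth \<delta> 0 \<noteq> 0" using dn subdegree_eq_0_iff by blast
  have inv: "\<delta> * inverse \<delta> = 1" using inverse_mult_eq_1'[OF d00] .
  define al where "al = det2 v q' * inverse \<delta>"
  define be where "be = det2 p' v * inverse \<delta>"
  show ?thesis
  proof (rule ex1I[of _ "(al \<cdot>\<^sub>v p', be \<cdot>\<^sub>v q')"])
    have "det2 (al \<cdot>\<^sub>v p') p = 0" unfolding det2_def using pe p'c by (simp add: algebra_simps)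
    moreover have "det2 (be \<cdot>\<^sub>v q') q = 0" unfolding det2_def using qe q'c by (simp add: algebra_simps)
    moreover have "v = al \<cdot>\<^sub>v p' + be \<cdot>\<^sub>v q'"
    proof (rule eq_vecI)
      show "dim_vec v = dim_vec (al \<cdot>\<^sub>v p' + be \<cdot>\<^sub>v q')" using v p'c q'c by simp
      fix k assume "k < dim_vec (al \<cdot>\<^sub>v p' + be \<cdot>\<^sub>v q')"
      hence k: "k < 2" using p'c q'c by simp
      have idt: "det2 v q' * p'$k + det2 p' v * q'$k = \<delta> * v$k"
        using k unfolding \<delta>_def det2_def by (auto simp: less_2_cases_iff algebra_simps)
      have "(al \<cdot>\<^sub>v p' + be \<cdot>\<^sub>v q')$k = (det2 v q' * p'$k + det2 p' v * q'$k) * inverse \<delta>"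
        using k p'c q'c unfolding al_def be_def by (simp add: algebra_simps)
      also have "\<dots> = v$k * (\<delta> * inverse \<delta>)" unfolding idt by (simp add: algebra_simps)
      finally show "v$k = (al \<cdot>\<^sub>v p' + be \<cdot>\<^sub>v q')$k" using inv by simp
    qed
    ultimately show "fst (al \<cdot>\<^sub>v p', be \<cdot>\<^sub>v q') \<in> NS p \<and> snd (al \<cdot>\<^sub>v p', be \<cdot>\<^sub>v q') \<in> NS q \<and>
       v = fst (al \<cdot>\<^sub>v p', be \<cdot>\<^sub>v q') + snd (al \<cdot>\<^sub>v p', be \<cdot>\<^sub>v q')"
      unfolding NS_def using p'c q'c by simp
  next
    fix pr assume pr: "fst pr \<in> NS p \<and> snd pr \<in> NS q \<and> v = fst pr + snd pr"
    define x where "x = fst pr"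
    define y where "y = snd pr"
    have xc: "x \<in> carrier_vec 2" and yc: "y \<in> carrier_vec 2" and dx: "det2 x p = 0" and dy: "det2 y q = 0"
      and vxy: "v = x + y" using pr unfolding x_def y_def NS_def by auto
    have E1: "fst pr = al \<cdot>\<^sub>v p'" and E2: "snd pr = be \<cdot>\<^sub>v q'"
    proof -
      define x2 where "x2 = al \<cdot>\<^sub>v p'"
      define y2 where "y2 = be \<cdot>\<^sub>v q'"
      have dx2: "det2 x2 p = 0" unfolding x2_def det2_def using pe p'c by (simp add: algebra_simps)
      have dy2: "det2 y2 q = 0" unfolding y2_def det2_def using qe q'c by (simp add: algebra_simps)
      have x2c: "x2 \<in> carrier_vec 2" and y2c: "y2 \<in> carrier_vec 2" using p'c q'c by (simp_all add: x2_def y2_def)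
      have vxy2: "v = x2 + y2"
      proof (rule eq_vecI)
        show "dim_vec v = dim_vec (x2 + y2)" using v x2c y2c by simp
        fix k assume "k < dim_vec (x2 + y2)"
        hence k: "k < 2" using x2c y2c by simp
        have idt: "det2 v q' * p'$k + det2 p' v * q'$k = \<delta> * v$k"
          using k unfolding \<delta>_def det2_def by (auto simp: less_2_cases_iff algebra_simps)
        have "(x2 + y2)$k = (det2 v q' * p'$k + det2 p' v * q'$k) * inverse \<delta>"
          using k p'c q'c unfolding x2_def y2_def al_def be_def by (simp add: algebra_simps)
        also have "\<dots> = v$k * (\<delta> * inverse \<delta>)" unfolding idt by (simp add: algebra_simps)
        finally show "v$k = (x2 + y2)$k" using inv by simp
      qed
      define z0 where "z0 = x$0 - x2$0"
      define z1 where "z1 = x$1 - x2$1"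
      have c0: "x$0 + y$0 = x2$0 + y2$0"
      proof -
        have "v$0 = x$0 + y$0" using vxy yc by simp
        moreover have "v$0 = x2$0 + y2$0" using vxy2 y2c by simp
        ultimately show ?thesis by simp
      qed
      have c1: "x$1 + y$1 = x2$1 + y2$1"
      proof -
        have "v$1 = x$1 + y$1" using vxy yc by simp
        moreover have "v$1 = x2$1 + y2$1" using vxy2 y2c by simp
        ultimately show ?thesis by simp
      qed
      have zy0: "z0 = y2$0 - y$0" using aux_sub[OF c0] unfolding z0_def .
      have zy1: "z1 = y2$1 - y$1" using aux_sub[OF c1] unfolding z1_def .
      have h1: "z0 * p$1 - z1 * p$0 = 0" using dx dx2 unfolding z0_def z1_def det2_def by (simp add: algebra_simps)
      have h2: "z0 * q$1 - z1 * q$0 = 0" using dy dy2 unfolding zy0 zy1 det2_def by (simp add: algebra_simps)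
      have "z0 * det2 p q = p$0 * (z0 * q$1 - z1 * q$0) - q$0 * (z0 * p$1 - z1 * p$0)"
        unfolding det2_def by (simp add: algebra_simps)
      hence "z0 * det2 p q = 0" using h1 h2 by simp
      hence z00: "z0 = 0" using d0 by simp
      have "z1 * det2 p q = p$1 * (z0 * q$1 - z1 * q$0) - q$1 * (z0 * p$1 - z1 * p$0)"
        unfolding det2_def by (simp add: algebra_simps)
      hence "z1 * det2 p q = 0" using h1 h2 by simp
      hence z10: "z1 = 0" using d0 by simp
      have xx: "x = x2"
        using xc x2c z00 z10 unfolding z0_def z1_def by (intro eq_vecI) (auto simp: less_2_cases_iff)
      have yy: "y = y2"
        using yc y2c z00 z10 unfolding zy0 zy1 by (intro eq_vecI) (auto simp: less_2_cases_iff)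
      show "fst pr = al \<cdot>\<^sub>v p'" using xx x_def x2_def by simp
      show "snd pr = be \<cdot>\<^sub>v q'" using yy y_def y2_def by simp
    qed
    show "pr = (al \<cdot>\<^sub>v p', be \<cdot>\<^sub>v q')" using E1 E2 by (simp add: prod_eq_iff)
  qed
qed

lemma prev_lt: "0 < n \<Longrightarrow> prev_v n i < n" unfolding prev_v_def by simp

lemma subrep_N:
  assumes n: "0 < n" and cX: "\<forall>j<n. X j \<in> carrier_mat 2 2" and cY: "\<forall>j<n. Y j \<in> carrier_mat 2 2"
    and cQ: "\<forall>i<n. Q i \<in> carrier_mat 2 2" and YX: "\<forall>j<n. Y j * X j = fps_X \<cdot>\<^sub>m 1\<^sub>m 2"
    and XQ: "\<forall>i<n. \<exists>c. c \<noteq> 0 \<and> X i * Q (prev_v n i) = c \<cdot>\<^sub>m Q i"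
    and u: "u \<in> carrier_vec 2"
  shows "subrep n 2 X Y (\<lambda>i. NS (Q i *\<^sub>v u))"
  unfolding subrep_def
proof (intro conjI allI impI ballI)
  fix i assume "i < n" thus "submod 2 (NS (Q i *\<^sub>v u))" using submod_NS by blast
next
  fix i v assume i: "i < n" and v: "v \<in> NS (Q (prev_v n i) *\<^sub>v u)"
  define pv where "pv = prev_v n i"
  have pvn: "pv < n" using prev_lt[OF n] pv_def by simp
  obtain c where c: "c \<noteq> 0" "X i * Q pv = c \<cdot>\<^sub>m Q i" using XQ i pv_def by blast
  have Xi: "X i \<in> carrier_mat 2 2" and Qi: "Q i \<in> carrier_mat 2 2" and Qp: "Q pv \<in> carrier_mat 2 2"
    using cX cQ i pvn by auto
  have vc: "v \<in> carrier_vec 2" and dv: "det2 v (Q pv *\<^sub>v u) = 0" using v pv_def unfolding NS_def by auto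
  have zc: "Q pv *\<^sub>v u \<in> carrier_vec 2" using Qp u by simp
  have "X i *\<^sub>v (Q pv *\<^sub>v u) = (X i * Q pv) *\<^sub>v u" using Xi Qp u by simp
  also have "\<dots> = c \<cdot>\<^sub>v (Q i *\<^sub>v u)" using c smat_mv[OF Qi u] by simp
  finally have e: "X i *\<^sub>v (Q pv *\<^sub>v u) = c \<cdot>\<^sub>v (Q i *\<^sub>v u)" .
  have "det2 (X i *\<^sub>v v) (X i *\<^sub>v (Q pv *\<^sub>v u)) = 0" using det2_mv[OF Xi vc zc] dv by simp
  hence "c * det2 (X i *\<^sub>v v) (Q i *\<^sub>v u) = 0" unfolding e using det2_smult2 Qi u by simp
  hence "det2 (X i *\<^sub>v v) (Q i *\<^sub>v u) = 0" using c by simp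
  thus "X i *\<^sub>v v \<in> NS (Q i *\<^sub>v u)" unfolding NS_def using Xi vc by simp
next
  fix i v assume i: "i < n" and v: "v \<in> NS (Q i *\<^sub>v u)"
  define pv where "pv = prev_v n i"
  have pvn: "pv < n" using prev_lt[OF n] pv_def by simp
  obtain c where c: "c \<noteq> 0" "X i * Q pv = c \<cdot>\<^sub>m Q i" using XQ i pv_def by blast
  have Xi: "X i \<in> carrier_mat 2 2" and Yi: "Y i \<in> carrier_mat 2 2" and Qi: "Q i \<in> carrier_mat 2 2"
    and Qp: "Q pv \<in> carrier_mat 2 2" using cX cY cQ i pvn by auto
  have vc: "v \<in> carrier_vec 2" and dv: "det2 v (Q i *\<^sub>v u) = 0" using v unfolding NS_def by auto
  have zc: "Q pv *\<^sub>v u \<in> carrier_vec 2" using Qp u by simp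
  have qic: "Q i *\<^sub>v u \<in> carrier_vec 2" using Qi u by simp
  have "X i *\<^sub>v (Q pv *\<^sub>v u) = (X i * Q pv) *\<^sub>v u" using Xi Qp u by simp
  also have "\<dots> = c \<cdot>\<^sub>v (Q i *\<^sub>v u)" using c smat_mv[OF Qi u] by simp
  finally have e: "X i *\<^sub>v (Q pv *\<^sub>v u) = c \<cdot>\<^sub>v (Q i *\<^sub>v u)" .
  have "Y i *\<^sub>v (X i *\<^sub>v (Q pv *\<^sub>v u)) = (Y i * X i) *\<^sub>v (Q pv *\<^sub>v u)" using Yi Xi zc by simp
  also have "\<dots> = fps_X \<cdot>\<^sub>v (Q pv *\<^sub>v u)" using YX i scal_mv[OF zc] by simp
  finally have e2: "Y i *\<^sub>v (X i *\<^sub>v (Q pv *\<^sub>v u)) = fps_X \<cdot>\<^sub>v (Q pv *\<^sub>v u)" .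
  have xzc: "X i *\<^sub>v (Q pv *\<^sub>v u) \<in> carrier_vec 2" using Xi zc by simp
  have "det2 (Y i *\<^sub>v v) (Y i *\<^sub>v (X i *\<^sub>v (Q pv *\<^sub>v u))) = mdet (Y i) * det2 v (X i *\<^sub>v (Q pv *\<^sub>v u))"
    using det2_mv[OF Yi vc xzc] .
  also have "\<dots> = mdet (Y i) * (c * det2 v (Q i *\<^sub>v u))" unfolding e using det2_smult2[OF qic] by simp
  also have "\<dots> = 0" using dv by simp
  finally have "fps_X * det2 (Y i *\<^sub>v v) (Q pv *\<^sub>v u) = 0" unfolding e2 using det2_smult2[OF zc] by simp
  hence "det2 (Y i *\<^sub>v v) (Q (prev_v n i) *\<^sub>v u) = 0" using pv_def by simp
  thus "Y i *\<^sub>v v \<in> NS (Q (prev_v n i) *\<^sub>v u)" unfolding NS_def using Yi vc by simp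
qed

lemma smult_one_mat': "A \<in> carrier_mat 2 2 \<Longrightarrow> (1::complex fps) \<cdot>\<^sub>m A = A"
  by (intro eq_matI) auto

theorem corollary3p5:
  fixes k n :: nat
  assumes "1 \<le> k" and "k \<le> n - 1" and "n < 6"
  shows "\<not> (\<exists>X Y. cm_rep k n 2 X Y \<and> indecomposable n 2 X Y)"
proof
  assume "\<exists>X Y. cm_rep k n 2 X Y \<and> indecomposable n 2 X Y"
  then obtain X Y where cm: "cm_rep k n 2 X Y" and ind: "indecomposable n 2 X Y" by blast
  have n2: "2 \<le> n" and kn: "k < n" using assms by auto
  hence n0: "0 < n" by simp
  have cX: "\<forall>j<n. X j \<in> carrier_mat 2 2" and cY: "\<forall>j<n. Y j \<in> carrier_mat 2 2"
    and comm: "\<forall>i<n. X i * Y i = Y ((i + 1) mod n) * X ((i + 1) mod n)"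
    and xyk: "\<forall>i<n. xpath n 2 X i k = ypath n 2 Y i (n - k)"
    and XY: "\<forall>i<n. X i * Y i = fps_X \<cdot>\<^sub>m 1\<^sub>m 2"
    using cm unfolding cm_rep_def by auto
  have YX: "\<forall>j<n. Y j * X j = fps_X \<cdot>\<^sub>m 1\<^sub>m 2"
  proof (intro allI impI)
    fix j assume j: "j < n"
    define i where "i = (j + n - 1) mod n"
    have i: "i < n" using n0 i_def by simp
    have "(i + 1) mod n = (j + n - 1 + 1) mod n" unfolding i_def by (metis mod_add_left_eq)
    also have "\<dots> = j" using j n0 by simp
    finally have "(i + 1) mod n = j" .
    thus "Y j * X j = fps_X \<cdot>\<^sub>m 1\<^sub>m 2" using comm XY i by metis
  qed
  define P where "P j = xpath n 2 X 0 j" for j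
  have car: "\<forall>j\<le>n. P j \<in> carrier_mat 2 2" unfolding P_def using xpath_car[OF n0 cX] by blast
  have P0: "P 0 = 1\<^sub>m 2" unfolding P_def by simp
  have PS: "P (Suc j) = X (Suc j mod n) * P j" for j unfolding P_def by simp
  have Pn: "P n = fps_X ^ (n - k) \<cdot>\<^sub>m 1\<^sub>m 2"
  proof -
    have "P n = xpath n 2 X 0 (k + (n - k))" unfolding P_def using kn by simp
    also have "\<dots> = xpath n 2 X ((0 + k) mod n) (n - k) * xpath n 2 X 0 k"
      using xpath_add[OF n0 cX] by blast
    also have "\<dots> = xpath n 2 X (bk n 0 (n - k)) (n - k) * ypath n 2 Y 0 (n - k)"
    proof -
      have "bk n 0 (n - k) = k" unfolding bk_def using kn assms(1) by simp
      thus ?thesis using xyk n0 kn by simp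
    qed
    also have "\<dots> = fps_X ^ (n - k) \<cdot>\<^sub>m 1\<^sub>m 2" using xy_path[OF n0 cX cY XY] by blast
    finally show ?thesis .
  qed
  have stepM: "\<forall>j. 1 \<le> j \<longrightarrow> j \<le> n \<longrightarrow> (\<exists>A B. A \<in> carrier_mat 2 2 \<and> B \<in> carrier_mat 2 2 \<and>
        A * B = fps_X \<cdot>\<^sub>m 1\<^sub>m 2 \<and> B * A = fps_X \<cdot>\<^sub>m 1\<^sub>m 2 \<and> P j = A * P (j-1))"
  proof (intro allI impI)
    fix j assume j: "1 \<le> j" "j \<le> n"
    have jm: "j mod n < n" using n0 by simp
    have "P j = X (j mod n) * P (j - 1)" using PS[of "j-1"] j by simp
    thus "\<exists>A B. A \<in> carrier_mat 2 2 \<and> B \<in> carrier_mat 2 2 \<and>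
        A * B = fps_X \<cdot>\<^sub>m 1\<^sub>m 2 \<and> B * A = fps_X \<cdot>\<^sub>m 1\<^sub>m 2 \<and> P j = A * P (j-1)"
      using cX cY XY YX jm by blast
  qed
  obtain u w where u: "u \<in> carrier_vec 2" and w: "w \<in> carrier_vec 2" and dt: "fps_nth (det2 u w) 0 \<noteq> 0"
    and bnd: "\<forall>i<n. subdegree (mdet (P i)) \<le> cv (P i *\<^sub>v u) + cv (P i *\<^sub>v w)"
  proof -
    have "n \<le> 5" "1 \<le> n" using assms by auto
    from core[OF this car P0 Pn stepM] show ?thesis using that by blast
  qed
  have dP: "mdet (P j) \<noteq> 0" for j
  proof (induction j)
    case 0 show ?case using P0 by simp
  next
    case (Suc j)
    have jm: "Suc j mod n < n" using n0 by simp
    have c1: "X (Suc j mod n) \<in> carrier_mat 2 2" "Y (Suc j mod n) \<in> carrier_mat 2 2" using cX cY jm by auto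
    have "mdet (X (Suc j mod n)) * mdet (Y (Suc j mod n)) = fps_X * fps_X"
      using mdet_mult[OF c1] XY jm by simp
    hence "mdet (X (Suc j mod n)) \<noteq> 0" by auto
    moreover have "P j \<in> carrier_mat 2 2" unfolding P_def using xpath_car[OF n0 cX] by blast
    ultimately show ?case using PS[of j] mdet_mult[OF c1(1)] Suc by simp
  qed
  have XQ: "\<forall>i<n. \<exists>c. c \<noteq> 0 \<and> X i * P (prev_v n i) = c \<cdot>\<^sub>m P i"
  proof (intro allI impI)
    fix i assume i: "i < n"
    show "\<exists>c. c \<noteq> 0 \<and> X i * P (prev_v n i) = c \<cdot>\<^sub>m P i"
    proof (cases "i = 0")
      case True
      have pv: "prev_v n i = n - 1" unfolding prev_v_def True using n0 by simp
      have "X i * P (n - 1) = P n" using PS[of "n-1"] True n0 by simp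
      also have "\<dots> = fps_X ^ (n - k) \<cdot>\<^sub>m P i" using Pn P0 True by simp
      finally show ?thesis using pv by (intro exI[of _ "fps_X ^ (n - k)"]) simp
    next
      case False
      have e: "i + n - 1 = (i - 1) + n" using False by simp
      have "prev_v n i = ((i - 1) + n) mod n" unfolding prev_v_def e ..
      also have "\<dots> = i - 1" using i by simp
      finally have pv: "prev_v n i = i - 1" .
      have "X i * P (i - 1) = P i" using PS[of "i-1"] False i by simp
      also have "\<dots> = 1 \<cdot>\<^sub>m P i" using smult_one_mat' car i by simp
      finally show ?thesis using pv by (intro exI[of _ 1]) simp
    qed
  qed
  have cQ: "\<forall>i<n. P i \<in> carrier_mat 2 2" using car by simp
  have nzu: "nzv u" and nzw: "nzv w" using dt unfolding nzv_def det2_def by auto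
  have d2: "det2 u w \<noteq> 0" using dt by auto
  have "decomposable n 2 X Y"
    unfolding decomposable_def
  proof (rule exI, rule exI, intro conjI)
    show "subrep n 2 X Y (\<lambda>i. NS (P i *\<^sub>v u))" using subrep_N[OF n0 cX cY cQ YX XQ u] .
    show "subrep n 2 X Y (\<lambda>i. NS (P i *\<^sub>v w))" using subrep_N[OF n0 cX cY cQ YX XQ w] .
    have "u \<in> NS (P 0 *\<^sub>v u)" unfolding NS_def P0 using u det2_self by simp
    moreover have "u \<noteq> 0\<^sub>v 2" using nzu unfolding nzv_def by auto
    ultimately show "\<exists>i<n. NS (P i *\<^sub>v u) \<noteq> {0\<^sub>v 2}" using n0 by blast
    have "w \<in> NS (P 0 *\<^sub>v w)" unfolding NS_def P0 using w det2_self by simp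
    moreover have "w \<noteq> 0\<^sub>v 2" using nzw unfolding nzv_def by auto
    ultimately show "\<exists>i<n. NS (P i *\<^sub>v w) \<noteq> {0\<^sub>v 2}" using n0 by blast
    show "\<forall>i<n. \<forall>(v::complex fps vec)\<in>carrier_vec 2. \<exists>!p. fst p \<in> NS (P i *\<^sub>v u) \<and> snd p \<in> NS (P i *\<^sub>v w) \<and> v = fst p + snd p"
    proof (intro allI impI ballI)
      fix i and v :: "complex fps vec" assume i: "i < n" and v: "v \<in> carrier_vec 2"
      have Pi: "P i \<in> carrier_mat 2 2" using car i by simp
      have e: "det2 (P i *\<^sub>v u) (P i *\<^sub>v w) = mdet (P i) * det2 u w" using det2_mv[OF Pi u w] .
      have ne: "det2 (P i *\<^sub>v u) (P i *\<^sub>v w) \<noteq> 0" unfolding e using dP d2 by simp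
      have "subdegree (det2 (P i *\<^sub>v u) (P i *\<^sub>v w)) = subdegree (mdet (P i))"
        unfolding e using dP d2 dt by simp
      hence sl: "subdegree (det2 (P i *\<^sub>v u) (P i *\<^sub>v w)) \<le> cv (P i *\<^sub>v u) + cv (P i *\<^sub>v w)"
        using bnd i by simp
      show "\<exists>!p. fst p \<in> NS (P i *\<^sub>v u) \<and> snd p \<in> NS (P i *\<^sub>v w) \<and> v = fst p + snd p"
        using uniq2[OF _ _ nz_mv[OF Pi dP u nzu] nz_mv[OF Pi dP w nzw] ne sl v] Pi u w by simp
    qed
  qed
  thus False using ind unfolding indecomposable_def by blast
qed

end
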